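(* Assume the setting: $G$ an infinite discrete group, $B$ a unital C$^*$-algebra with action $\alpha$, $A_1=B\rtimes_{\alpha,r}G$ with implementing unitaries $u_g$, $\phi_1$ a faithful $\alpha$-invariant state on $B$ extended to $A_1$ by vanishing on $Bu_g$ for $g\neq e$, $A_2\neq\mathbb{C}1$ a unital C$^*$-algebra with faithful state $\phi_2$, and $(A,\phi)=(A_1,\phi_1)*(A_2,\phi_2)$ the reduced free product. Let $D_0$ be the C$^*$-subalgebra of $A$ generated by $\bigcup_{g\in G}u_g^*A_2u_g$. Then $D_0$ has trivial relative commutant in $A$: if $x\in A$ commutes with every element of $D_0$, then $x\in\mathbb{C}1$. Consequently the C$^*$-subalgebra $D$ generated by $B\cup\bigcup_{g\in G}u_g^*A_2u_g$ also has trivial relative commutant in $A$.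
   Context: Reduced free product $(A,\phi)$: the unital C$^*$-algebra generated by copies of $A_1,A_2$, with a state $\phi$ having faithful GNS representation, restricting to $\phi_i$ on $A_i$, and such that $A_1,A_2$ are free with respect to $\phi$ (i.e. $\phi(a_1\cdots a_n)=0$ whenever each $a_j\in\ker\phi$ lies in one of the algebras and consecutive $a_j$ lie in different algebras). *)

theory Defs
  imports "HOL-Analysis.Analysis"
begin

text \<open>Abstract ambient unital C*-algebra: a real Banach algebra with unit, a central
  imaginary unit iu (so it is a complex Banach algebra) and an involution star
  satisfying the C*-identity.\<close>

definition cstar_ambient :: "('a::{real_normed_algebra_1,banach} \<Rightarrow> 'a) \<Rightarrow> 'a \<Rightarrow> bool" where
  "cstar_ambient star iu \<longleftrightarrow>
     iu * iu = - 1 \<and> (\<forall>x. iu * x = x * iu) \<and> (\<forall>x. norm (iu * x) = norm x) \<and>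
     (\<forall>x. star (star x) = x) \<and> (\<forall>x y. star (x + y) = star x + star y) \<and>
     (\<forall>r x. star (scaleR r x) = scaleR r (star x)) \<and>
     (\<forall>x y. star (x * y) = star y * star x) \<and> star iu = - iu \<and>
     (\<forall>x. norm (star x * x) = (norm x)\<^sup>2)"

definition sc :: "'a::real_normed_algebra_1 \<Rightarrow> complex \<Rightarrow> 'a" where
  "sc iu c = scaleR (Re c) 1 + scaleR (Im c) iu"

definition cstar_sub :: "('a::{real_normed_algebra_1,banach} \<Rightarrow> 'a) \<Rightarrow> 'a \<Rightarrow> 'a set \<Rightarrow> bool" where
  "cstar_sub star iu S \<longleftrightarrow> 1 \<in> S \<and> closed S \<and>
     (\<forall>x\<in>S. \<forall>y\<in>S. x + y \<in> S \<and> x * y \<in> S) \<and>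
     (\<forall>x\<in>S. \<forall>c. sc iu c * x \<in> S) \<and> (\<forall>x\<in>S. star x \<in> S)"

definition cgen :: "('a::{real_normed_algebra_1,banach} \<Rightarrow> 'a) \<Rightarrow> 'a \<Rightarrow> 'a set \<Rightarrow> 'a set" where
  "cgen star iu X = \<Inter>{S. cstar_sub star iu S \<and> X \<subseteq> S}"

definition clinear_on :: "'a::real_normed_algebra_1 \<Rightarrow> 'a set \<Rightarrow> ('a \<Rightarrow> 'b::real_vector) \<Rightarrow> (complex \<Rightarrow> 'b \<Rightarrow> 'b) \<Rightarrow> bool" where
  "clinear_on iu S f smul \<longleftrightarrow> (\<forall>x\<in>S. \<forall>y\<in>S. f (x + y) = f x + f y) \<and>
     (\<forall>x\<in>S. \<forall>c. f (sc iu c * x) = smul c (f x))"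

definition is_state :: "('a::{real_normed_algebra_1,banach} \<Rightarrow> 'a) \<Rightarrow> 'a \<Rightarrow> 'a set \<Rightarrow> ('a \<Rightarrow> complex) \<Rightarrow> bool" where
  "is_state star iu S \<phi> \<longleftrightarrow> clinear_on iu S \<phi> (*) \<and> \<phi> 1 = 1 \<and>
     (\<forall>x\<in>S. Im (\<phi> (star x * x)) = 0 \<and> Re (\<phi> (star x * x)) \<ge> 0)"

definition faithful_state :: "('a::{real_normed_algebra_1,banach} \<Rightarrow> 'a) \<Rightarrow> 'a \<Rightarrow> 'a set \<Rightarrow> ('a \<Rightarrow> complex) \<Rightarrow> bool" where
  "faithful_state star iu S \<phi> \<longleftrightarrow> is_state star iu S \<phi> \<and>
     (\<forall>x\<in>S. \<phi> (star x * x) = 0 \<longrightarrow> x = 0)"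

text \<open>Faithful GNS representation: pi_phi(x) = 0 iff phi(y* x* x y) = 0 for all y.\<close>
definition gns_faithful :: "('a::{real_normed_algebra_1,banach} \<Rightarrow> 'a) \<Rightarrow> 'a set \<Rightarrow> ('a \<Rightarrow> complex) \<Rightarrow> bool" where
  "gns_faithful star S \<phi> \<longleftrightarrow>
     (\<forall>x\<in>S. (\<forall>y\<in>S. \<phi> (star y * star x * x * y) = 0) \<longrightarrow> x = 0)"

definition free_pair :: "('a::real_normed_algebra_1 \<Rightarrow> complex) \<Rightarrow> 'a set \<Rightarrow> 'a set \<Rightarrow> bool" where
  "free_pair \<phi> S1 S2 \<longleftrightarrow>
     (\<forall>xs ks. xs \<noteq> [] \<and> length ks = length xs \<and>
        (\<forall>i<length xs. (if ks ! i then xs ! i \<in> S1 else xs ! i \<in> S2) \<and> \<phi> (xs ! i) = 0) \<and>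
        (\<forall>i. Suc i < length xs \<longrightarrow> ks ! i \<noteq> ks ! Suc i)
        \<longrightarrow> \<phi> (prod_list xs) = 0)"

definition star_action :: "('a::{real_normed_algebra_1,banach} \<Rightarrow> 'a) \<Rightarrow> 'a \<Rightarrow> 'a set \<Rightarrow> ('g::group_add \<Rightarrow> 'a \<Rightarrow> 'a) \<Rightarrow> bool" where
  "star_action star iu B \<alpha> \<longleftrightarrow>
     (\<forall>g. bij_betw (\<alpha> g) B B) \<and>
     (\<forall>g. \<forall>x\<in>B. \<forall>y\<in>B. \<alpha> g (x + y) = \<alpha> g x + \<alpha> g y \<and> \<alpha> g (x * y) = \<alpha> g x * \<alpha> g y) \<and>
     (\<forall>g. \<forall>x\<in>B. \<forall>c. \<alpha> g (sc iu c * x) = sc iu c * \<alpha> g x) \<and>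
     (\<forall>g. \<forall>x\<in>B. \<alpha> g (star x) = star (\<alpha> g x)) \<and>
     (\<forall>x\<in>B. \<alpha> 0 x = x) \<and> (\<forall>g h. \<forall>x\<in>B. \<alpha> (g + h) x = \<alpha> g (\<alpha> h x))"

text \<open>A1 is (a copy of) the reduced crossed product of B by alpha, with implementing
  unitaries u: A1 is generated by B and a covariant unitary representation u, and
  there is a bounded linear map E : A1 \<rightarrow> B fixing B, killing B u_g for g \<noteq> e, and
  faithful. This characterizes the reduced crossed product up to canonical isomorphism.\<close>
definition reduced_crossed_product ::
  "('a::{real_normed_algebra_1,banach} \<Rightarrow> 'a) \<Rightarrow> 'a \<Rightarrow> 'a set \<Rightarrow> ('g::group_add \<Rightarrow> 'a \<Rightarrow> 'a) \<Rightarrow> ('g \<Rightarrow> 'a) \<Rightarrow> 'a set \<Rightarrow> bool" where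
  "reduced_crossed_product star iu B \<alpha> u A1 \<longleftrightarrow>
     cstar_sub star iu B \<and> star_action star iu B \<alpha> \<and>
     (\<forall>g. star (u g) * u g = 1 \<and> u g * star (u g) = 1) \<and>
     (\<forall>g h. u (g + h) = u g * u h) \<and>
     (\<forall>g. \<forall>b\<in>B. u g * b * star (u g) = \<alpha> g b) \<and>
     A1 = cgen star iu (B \<union> range u) \<and>
     (\<exists>E. E ` A1 \<subseteq> B \<and> clinear_on iu A1 E (\<lambda>c x. sc iu c * x) \<and> continuous_on A1 E \<and>
          (\<forall>b\<in>B. E b = b) \<and> (\<forall>g. \<forall>b\<in>B. g \<noteq> 0 \<longrightarrow> E (b * u g) = 0) \<and>
          (\<forall>x\<in>A1. E (star x * x) = 0 \<longrightarrow> x = 0))"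

end

theory Submission
  imports Defs "HOL-Computational_Algebra.Formal_Power_Series"
begin

locale cs =
  fixes star :: "'a::{real_normed_algebra_1,banach} \<Rightarrow> 'a" and iu :: 'a
  assumes amb: "cstar_ambient star iu"
begin

lemma iu_sq: "iu * iu = - 1" using amb unfolding cstar_ambient_def by blast
lemma iu_comm: "iu * x = x * iu" using amb unfolding cstar_ambient_def by blast
lemma norm_iu: "norm (iu * x) = norm x" using amb unfolding cstar_ambient_def by blast
lemma star_star[simp]: "star (star x) = x" using amb unfolding cstar_ambient_def by blast
lemma star_add: "star (x + y) = star x + star y" using amb unfolding cstar_ambient_def by blast
lemma star_scaleR: "star (scaleR r x) = scaleR r (star x)" using amb unfolding cstar_ambient_def by blast
lemma star_mult: "star (x * y) = star y * star x" using amb unfolding cstar_ambient_def by blast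
lemma star_iu: "star iu = - iu" using amb unfolding cstar_ambient_def by blast
lemma cstar_id: "norm (star x * x) = (norm x)\<^sup>2" using amb unfolding cstar_ambient_def by blast

lemma star_0[simp]: "star 0 = 0" using star_scaleR[of 0 0] by simp
lemma star_minus: "star (- x) = - star x" using star_scaleR[of "-1" x] by simp
lemma star_diff: "star (x - y) = star x - star y"
  by (simp only: diff_conv_add_uminus star_add star_minus)
lemma star_one[simp]: "star 1 = 1"
proof -
  have "star 1 = star 1 * star (star 1)" by simp
  also have "\<dots> = star (star 1 * 1)" by (simp only: star_mult)
  also have "\<dots> = 1" by simp
  finally show ?thesis .
qed
lemma star_inj: "star x = star y \<Longrightarrow> x = y" by (metis star_star)
lemma star_power: "star (x ^ n) = (star x) ^ n"
proof (induction n)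
  case (Suc n)
  have "star (x ^ Suc n) = star (x ^ n * x)" by (simp only: power_Suc2)
  also have "\<dots> = star x * star (x ^ n)" by (simp only: star_mult)
  also have "\<dots> = (star x) ^ Suc n" by (simp only: Suc power_Suc)
  finally show ?case .
qed simp

lemma norm_star_le: "norm y \<le> norm (star y)"
proof (cases "y = 0")
  case False
  have 1: "norm (star y * y) = norm y * norm y" using cstar_id[of y] by (simp only: power2_eq_square)
  have "norm y * norm y \<le> norm (star y) * norm y"
    using norm_mult_ineq[of "star y" y] unfolding 1 .
  moreover have "norm y > 0" using False by simp
  ultimately show ?thesis by (rule mult_right_le_imp_le)
qed simp

lemma norm_star[simp]: "norm (star x) = norm x"
proof -
  have "norm (star x) \<le> norm (star (star x))" by (rule norm_star_le)
  then show ?thesis using norm_star_le[of x] by (simp only: star_star)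
qed

lemma bl_star: "bounded_linear star"
  by (rule bounded_linear_intro[where K=1]) (auto simp: star_add star_scaleR)

lemma sc_iu_comm: "scaleR r iu * x = x * scaleR r iu"
  by (simp add: iu_comm)

lemma sc_comm: "sc iu c * x = x * sc iu c"
  by (simp add: sc_def algebra_simps iu_comm)

lemma sc_mult: "sc iu c * sc iu d = sc iu (c * d)"
  by (simp add: sc_def distrib_left distrib_right iu_sq scaleR_add_left scaleR_diff_left algebra_simps)

lemma sc_add: "sc iu (c + d) = sc iu c + sc iu d"
  by (simp add: sc_def algebra_simps)
lemma sc_one[simp]: "sc iu 1 = 1" by (simp add: sc_def)
lemma sc_zero[simp]: "sc iu 0 = 0" by (simp add: sc_def)
lemma sc_ii: "sc iu \<i> = iu" by (simp add: sc_def)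
lemma sc_real: "sc iu (complex_of_real r) = scaleR r 1" by (simp add: sc_def)
lemma sc_real_mult: "sc iu (complex_of_real r) * x = scaleR r x" by (simp add: sc_def)
lemma sc_minus_one: "sc iu (-1) * x = - x" by (simp add: sc_def)
lemma sc_star: "star (sc iu c) = sc iu (cnj c)"
  by (simp add: sc_def star_add star_scaleR star_iu)
lemma sc_assoc: "sc iu c * (sc iu d * x) = sc iu (c * d) * x"
  by (simp add: mult.assoc[symmetric] sc_mult)
lemma sc_distrib: "sc iu c * (x + y) = sc iu c * x + sc iu c * y"
  by (simp add: distrib_left)
lemma sc_add_mult: "sc iu (c + d) * x = sc iu c * x + sc iu d * x"
  by (simp add: sc_add distrib_right)
lemma star_sc_mult: "star (sc iu c * x) = sc iu (cnj c) * star x"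
  by (simp add: star_mult sc_star sc_comm)

lemma csub_1: "cstar_sub star iu S \<Longrightarrow> 1 \<in> S" by (simp add: cstar_sub_def)
lemma csub_closed: "cstar_sub star iu S \<Longrightarrow> closed S" by (simp add: cstar_sub_def)
lemma csub_add: "cstar_sub star iu S \<Longrightarrow> x \<in> S \<Longrightarrow> y \<in> S \<Longrightarrow> x + y \<in> S" by (simp add: cstar_sub_def)
lemma csub_mult: "cstar_sub star iu S \<Longrightarrow> x \<in> S \<Longrightarrow> y \<in> S \<Longrightarrow> x * y \<in> S" by (simp add: cstar_sub_def)
lemma csub_sc: "cstar_sub star iu S \<Longrightarrow> x \<in> S \<Longrightarrow> sc iu c * x \<in> S" by (simp add: cstar_sub_def)
lemma csub_star: "cstar_sub star iu S \<Longrightarrow> x \<in> S \<Longrightarrow> star x \<in> S" by (simp add: cstar_sub_def)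
lemma csub_minus: "cstar_sub star iu S \<Longrightarrow> x \<in> S \<Longrightarrow> - x \<in> S"
  using csub_sc[of S x "-1"] by (simp add: sc_minus_one)
lemma csub_diff: "cstar_sub star iu S \<Longrightarrow> x \<in> S \<Longrightarrow> y \<in> S \<Longrightarrow> x - y \<in> S"
  using csub_add csub_minus by (metis diff_conv_add_uminus)
lemma csub_scR: "cstar_sub star iu S \<Longrightarrow> x \<in> S \<Longrightarrow> scaleR r x \<in> S"
  using csub_sc[of S x "complex_of_real r"] by (simp add: sc_real_mult)
lemma csub_0: "cstar_sub star iu S \<Longrightarrow> 0 \<in> S"
  using csub_sc[of S 1 0] csub_1 by simp
lemma csub_scal: "cstar_sub star iu S \<Longrightarrow> sc iu c \<in> S"
  using csub_sc[of S 1 c] csub_1 by simp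
lemma csub_power: "cstar_sub star iu S \<Longrightarrow> x \<in> S \<Longrightarrow> x ^ n \<in> S"
  by (induction n) (auto simp: csub_1 csub_mult)
lemma csub_sum: "cstar_sub star iu S \<Longrightarrow> (\<And>i. i \<in> I \<Longrightarrow> f i \<in> S) \<Longrightarrow> sum f I \<in> S"
  by (induction I rule: infinite_finite_induct) (auto simp: csub_0 csub_add)

lemma cgen_sub: "cstar_sub star iu (cgen star iu X)"
  unfolding cgen_def cstar_sub_def by (auto intro!: closed_Inter)
lemma cgen_incl: "X \<subseteq> cgen star iu X" unfolding cgen_def by auto
lemma cgen_least: "cstar_sub star iu S \<Longrightarrow> X \<subseteq> S \<Longrightarrow> cgen star iu X \<subseteq> S"
  unfolding cgen_def by auto
lemma cgen_mono: "X \<subseteq> Y \<Longrightarrow> cgen star iu X \<subseteq> cgen star iu Y"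
  using cgen_least[OF cgen_sub] cgen_incl by blast

end

context cs
begin

lemma sqrt_exists:
  assumes S: "cstar_sub star iu S" and hS: "h \<in> S" and hs: "star h = h" and hn: "norm h < 1"
  shows "\<exists>k\<in>S. star k = k \<and> k * k = 1 - h"
proof -
  define c where "c n = ((1/2::real) gchoose n)" for n
  define f where "f n = c n *\<^sub>R (-h)^n" for n
  have sumc: "summable (\<lambda>n. \<bar>c n\<bar> * norm h ^ n)"
  proof -
    have a: "\<bar>(1 + norm h)/2\<bar> < 1" using hn by simp
    have "summable (\<lambda>n. c n * ((1 + norm h)/2)^n)"
      using gen_binomial_real[OF a, of "1/2"] unfolding c_def by (simp add: sums_iff)
    then have "summable (\<lambda>n. norm (c n * norm h ^ n))"
      by (rule powser_insidea) (use hn in simp)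
    then show ?thesis by (simp add: abs_mult)
  qed
  have fsum: "summable (\<lambda>n. norm (f n))"
  proof (rule summable_comparison_test'[OF sumc])
    fix n :: nat
    have "norm (norm (f n)) = norm (f n)" by simp
    also have "\<dots> = \<bar>c n\<bar> * norm ((-h)^n)" unfolding f_def by (rule norm_scaleR)
    also have "\<dots> \<le> \<bar>c n\<bar> * norm (-h) ^ n"
      by (rule mult_left_mono[OF norm_power_ineq]) simp
    finally show "norm (norm (f n)) \<le> \<bar>c n\<bar> * norm h ^ n" by simp
  qed
  have fs: "summable f" by (rule summable_norm_cancel[OF fsum])
  define k where "k = suminf f"
  have fS: "f n \<in> S" for n
    unfolding f_def by (intro csub_scR csub_power csub_minus S hS)
  have kS: "k \<in> S"
  proof (rule closed_sequentially[OF csub_closed[OF S]])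
    show "(\<lambda>n. \<Sum>i<n. f i) \<longlonglongrightarrow> k" unfolding k_def by (rule summable_LIMSEQ[OF fs])
    show "(\<Sum>i<n. f i) \<in> S" for n by (rule csub_sum[OF S fS])
  qed
  have "star k = (\<Sum>n. star (f n))"
    unfolding k_def by (rule bounded_linear.suminf[OF bl_star fs])
  also have "\<dots> = k"
  proof -
    have "star (f n) = f n" for n
      by (simp add: f_def star_scaleR star_power star_minus hs)
    then show ?thesis unfolding k_def by simp
  qed
  finally have ks: "star k = k" .
  have "k * k = (\<Sum>n. \<Sum>i\<le>n. f i * f (n - i))"
    unfolding k_def by (rule Cauchy_product[OF fsum fsum])
  also have "\<dots> = (\<Sum>n. ((1::real) gchoose n) *\<^sub>R (-h)^n)"
  proof (rule suminf_cong)
    fix n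
    have "(\<Sum>i\<le>n. f i * f (n - i)) = (\<Sum>i\<le>n. (c i * c (n - i)) *\<^sub>R (-h)^n)"
    proof (rule sum.cong[OF refl])
      fix i assume "i \<in> {..n}"
      then have "(-h)^i * (-h)^(n-i) = (-h)^n" by (simp add: power_add[symmetric])
      then show "f i * f (n - i) = (c i * c (n - i)) *\<^sub>R (-h)^n"
        by (simp add: f_def)
    qed
    also have "\<dots> = (\<Sum>i\<le>n. c i * c (n - i)) *\<^sub>R (-h)^n"
      by (simp add: scaleR_sum_left)
    also have "(\<Sum>i\<le>n. c i * c (n - i)) = (1::real) gchoose n"
      using gbinomial_Vandermonde[of "1/2::real" "1/2" n] unfolding c_def
      by (simp add: atLeast0AtMost)
    finally show "(\<Sum>i\<le>n. f i * f (n - i)) = ((1::real) gchoose n) *\<^sub>R (-h)^n" .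
  qed
  also have "\<dots> = 1 - h"
  proof -
    have z: "((1::real) gchoose n) = 0" if "n \<notin> {0,1}" for n
    proof -
      have "((1::real) gchoose n) = of_nat (1 choose n)"
        using binomial_gbinomial[of 1 n, where 'a=real] by simp
      also have "1 choose n = 0" using that by (intro binomial_eq_0) auto
      finally show ?thesis by simp
    qed
    have "(\<lambda>n. ((1::real) gchoose n) *\<^sub>R (-h)^n) sums (\<Sum>n\<in>{0,1}. ((1::real) gchoose n) *\<^sub>R (-h)^n)"
      by (rule sums_finite) (auto simp: z)
    then show ?thesis by (simp add: sums_iff)
  qed
  finally show ?thesis using kS ks by blast
qed

end

context cs
begin

lemma iu_iu_mult: "iu * (iu * y) = - y"
  by (simp add: mult.assoc[symmetric] iu_sq)

lemma decomp:
  fixes x :: 'a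
  defines "h1 \<equiv> (1/2) *\<^sub>R (x + star x)" and "h2 \<equiv> (1/2) *\<^sub>R ((- iu) * (x - star x))"
  shows "star h1 = h1" "star h2 = h2" "x = h1 + iu * h2" "norm h1 \<le> norm x" "norm h2 \<le> norm x"
proof -
  show "star h1 = h1" unfolding h1_def by (simp add: star_scaleR star_add add.commute)
  have "star ((- iu) * (x - star x)) = (- iu) * (x - star x)"
    by (simp add: star_mult star_minus star_iu star_diff iu_comm algebra_simps)
  moreover have "star h2 = (1/2) *\<^sub>R star ((- iu) * (x - star x))" unfolding h2_def by (rule star_scaleR)
  ultimately show "star h2 = h2" unfolding h2_def by simp
  have "iu * h2 = (1/2) *\<^sub>R (x - star x)"
    unfolding h2_def by (simp add: iu_iu_mult scaleR_diff_right)
  then have "h1 + iu * h2 = (1/2) *\<^sub>R x + (1/2) *\<^sub>R x" unfolding h1_def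
    by (simp add: scaleR_add_right scaleR_diff_right)
  also have "\<dots> = (1/2 + 1/2) *\<^sub>R x" by (rule scaleR_add_left[symmetric])
  finally show "x = h1 + iu * h2" by simp
  have "norm h1 \<le> (1/2) * (norm x + norm (star x))"
    unfolding h1_def using norm_triangle_ineq[of x "star x"] by simp
  then show "norm h1 \<le> norm x" by simp
  have "norm h2 = (1/2) * norm (iu * (x - star x))"
    unfolding h2_def by simp
  also have "\<dots> = (1/2) * norm (x - star x)" by (simp add: norm_iu)
  also have "\<dots> \<le> (1/2) * (norm x + norm (star x))" using norm_triangle_ineq4[of x "star x"] by simp
  finally show "norm h2 \<le> norm x" by simp
qed

end

locale cstate = cs +
  fixes S :: "'a::{real_normed_algebra_1,banach} set" and \<phi> :: "'a \<Rightarrow> complex"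
  assumes S: "cstar_sub star iu S" and st: "is_state star iu S \<phi>"
begin

lemma phi_add: "x \<in> S \<Longrightarrow> y \<in> S \<Longrightarrow> \<phi> (x + y) = \<phi> x + \<phi> y"
  using st by (simp add: is_state_def clinear_on_def)
lemma phi_sc: "x \<in> S \<Longrightarrow> \<phi> (sc iu c * x) = c * \<phi> x"
  using st by (simp add: is_state_def clinear_on_def)
lemma phi_1: "\<phi> 1 = 1"
  using st by (simp add: is_state_def)
lemma phi_pos: "x \<in> S \<Longrightarrow> Im (\<phi> (star x * x)) = 0 \<and> Re (\<phi> (star x * x)) \<ge> 0"
  using st by (simp add: is_state_def)
lemma phi_0: "\<phi> 0 = 0"
  using phi_sc[OF csub_1[OF S], of 0] by simp
lemma phi_scal: "\<phi> (sc iu c) = c"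
  using phi_sc[OF csub_1[OF S], of c] by (simp add: phi_1)
lemma phi_minus: "x \<in> S \<Longrightarrow> \<phi> (- x) = - \<phi> x"
  using phi_sc[of x "-1"] by (simp add: sc_minus_one)
lemma phi_diff: "x \<in> S \<Longrightarrow> y \<in> S \<Longrightarrow> \<phi> (x - y) = \<phi> x - \<phi> y"
  using phi_add[of x "- y"] phi_minus[of y] csub_minus[OF S, of y] by simp
lemma phi_scR: "x \<in> S \<Longrightarrow> \<phi> (r *\<^sub>R x) = complex_of_real r * \<phi> x"
  using phi_sc[of x "complex_of_real r"] by (simp add: sc_real_mult)

lemma phi_herm: assumes "h \<in> S" "star h = h" shows "Im (\<phi> h) = 0"
proof -
  have S1: "1 + h \<in> S" "1 - h \<in> S" using assms csub_1[OF S] csub_add[OF S] csub_diff[OF S] by auto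
  have e: "star (1 + h) * (1 + h) - star (1 - h) * (1 - h) = h + h + h + h"
    using assms by (simp add: star_add star_diff algebra_simps)
  have hh: "h + h \<in> S" using csub_add[OF S] assms by auto
  have "\<phi> (h + h + h + h) = \<phi> (star (1 + h) * (1 + h)) - \<phi> (star (1 - h) * (1 - h))"
    unfolding e[symmetric] by (intro phi_diff csub_mult[OF S] csub_star[OF S] S1)
  moreover have "\<phi> (h + h + h + h) = 4 * \<phi> h"
    using assms hh csub_add[OF S] by (simp add: phi_add)
  ultimately have "4 * \<phi> h = \<phi> (star (1 + h) * (1 + h)) - \<phi> (star (1 - h) * (1 - h))"
    by simp
  then have "Im (4 * \<phi> h) = Im (\<phi> (star (1 + h) * (1 + h))) - Im (\<phi> (star (1 - h) * (1 - h)))"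
    by simp
  then show ?thesis using phi_pos[OF S1(1)] phi_pos[OF S1(2)] by simp
qed

lemma phi_le1: assumes "h \<in> S" "star h = h" "norm h < 1" shows "Re (\<phi> h) \<le> 1"
proof -
  obtain k where k: "k \<in> S" "star k = k" "k * k = 1 - h"
    using sqrt_exists[OF S assms] by blast
  have "Re (\<phi> (star k * k)) \<ge> 0" using phi_pos[OF k(1)] by simp
  then have "Re (\<phi> (1 - h)) \<ge> 0" using k by simp
  then show ?thesis using phi_diff[OF csub_1[OF S] assms(1)] by (simp add: phi_1)
qed

lemma phi_sa_bound: assumes "h \<in> S" "star h = h" shows "\<bar>Re (\<phi> h)\<bar> \<le> norm h"
proof (rule dense_ge)
  fix t assume t: "norm h < t"
  then have tp: "t > 0" using norm_ge_zero[of h] by linarith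
  define h' where "h' = (1/t) *\<^sub>R h"
  have h'S: "h' \<in> S" "(- h') \<in> S" unfolding h'_def using assms csub_scR[OF S] csub_minus[OF S] by auto
  have h's: "star h' = h'" "star (- h') = - h'" unfolding h'_def using assms by (auto simp: star_scaleR star_minus)
  have h'n: "norm h' < 1" "norm (- h') < 1" unfolding h'_def using t tp by (auto simp: field_simps)
  have r: "Re (\<phi> h') = Re (\<phi> h) / t" unfolding h'_def using assms(1) by (simp add: phi_scR)
  have r2: "Re (\<phi> (- h')) = - (Re (\<phi> h) / t)" using phi_minus[OF h'S(1)] r by simp
  have "Re (\<phi> h) / t \<le> 1" "- (Re (\<phi> h) / t) \<le> 1"
    using phi_le1[OF h'S(1) h's(1) h'n(1)] phi_le1[OF h'S(2) h's(2) h'n(2)] r r2 by auto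
  then show "\<bar>Re (\<phi> h)\<bar> \<le> t" using tp by (auto simp: field_simps abs_le_iff)
qed

lemma phi_bound: assumes "x \<in> S" shows "cmod (\<phi> x) \<le> 2 * norm x"
proof -
  define h1 where "h1 \<equiv> (1/2) *\<^sub>R (x + star x)"
  define h2 where "h2 \<equiv> (1/2) *\<^sub>R ((- iu) * (x - star x))"
  note d = decomp[of x, folded h1_def h2_def]
  have iuS: "iu \<in> S" using csub_scal[OF S, of \<i>] by (simp add: sc_ii)
  have hS: "h1 \<in> S" "h2 \<in> S" unfolding h1_def h2_def
    using assms iuS by (intro csub_scR[OF S] csub_add[OF S] csub_mult[OF S] csub_minus[OF S] csub_diff[OF S] csub_star[OF S]; simp)+
  have "\<phi> x = \<phi> h1 + \<phi> (sc iu \<i> * h2)" using d(3) hS phi_add csub_mult[OF S iuS] by (metis sc_ii)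
  also have "\<dots> = \<phi> h1 + \<i> * \<phi> h2" using phi_sc[OF hS(2)] by simp
  finally have e: "\<phi> x = \<phi> h1 + \<i> * \<phi> h2" .
  have "cmod (\<phi> x) \<le> cmod (\<phi> h1) + cmod (\<phi> h2)"
    unfolding e using norm_triangle_ineq[of "\<phi> h1" "\<i> * \<phi> h2"] by (simp add: norm_mult)
  also have "cmod (\<phi> h1) = \<bar>Re (\<phi> h1)\<bar>" by (rule cmod_eq_Re[OF phi_herm[OF hS(1) d(1)]])
  also have "cmod (\<phi> h2) = \<bar>Re (\<phi> h2)\<bar>" by (rule cmod_eq_Re[OF phi_herm[OF hS(2) d(2)]])
  finally show ?thesis using phi_sa_bound[OF hS(1) d(1)] phi_sa_bound[OF hS(2) d(2)] d(4,5) by linarith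
qed

lemma phi_star: assumes "x \<in> S" shows "\<phi> (star x) = cnj (\<phi> x)"
proof -
  define h1 where "h1 \<equiv> (1/2) *\<^sub>R (x + star x)"
  define h2 where "h2 \<equiv> (1/2) *\<^sub>R ((- iu) * (x - star x))"
  note d = decomp[of x, folded h1_def h2_def]
  have iuS: "iu \<in> S" using csub_scal[OF S, of \<i>] by (simp add: sc_ii)
  have hS: "h1 \<in> S" "h2 \<in> S" unfolding h1_def h2_def
    using assms iuS by (intro csub_scR[OF S] csub_add[OF S] csub_mult[OF S] csub_minus[OF S] csub_diff[OF S] csub_star[OF S]; simp)+
  have "\<phi> x = \<phi> h1 + \<phi> (sc iu \<i> * h2)" using d(3) hS phi_add csub_mult[OF S iuS] by (metis sc_ii)
  also have "\<dots> = \<phi> h1 + \<i> * \<phi> h2" using phi_sc[OF hS(2)] by simp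
  finally have e: "\<phi> x = \<phi> h1 + \<i> * \<phi> h2" .
  have sx: "star x = h1 + sc iu (-\<i>) * h2"
  proof -
    have "star x = star h1 + star h2 * star iu" by (subst d(3)) (simp add: star_add star_mult)
    also have "\<dots> = h1 + sc iu (-\<i>) * h2" using d(1,2) by (simp add: star_iu sc_def iu_comm)
    finally show ?thesis .
  qed
  have "\<phi> (star x) = \<phi> h1 + (-\<i>) * \<phi> h2"
    unfolding sx using hS by (simp add: phi_add phi_sc csub_sc[OF S])
  then show ?thesis unfolding e using phi_herm[OF hS(1) d(1)] phi_herm[OF hS(2) d(2)]
    by (simp add: complex_eq_iff)
qed

end

locale mainloc = cs star iu
  for star :: "'a::{real_normed_algebra_1,banach} \<Rightarrow> 'a" and iu :: 'a +
  fixes B A1 A2 A :: "'a set" and \<alpha> :: "'g::group_add \<Rightarrow> 'a \<Rightarrow> 'a" and u :: "'g \<Rightarrow> 'a"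
    and \<phi> :: "'a \<Rightarrow> complex"
  assumes G_inf: "infinite (UNIV :: 'g set)"
    and cp: "reduced_crossed_product star iu B \<alpha> u A1"
    and phi1_faithful: "faithful_state star iu B \<phi>"
    and phi1_inv: "\<forall>g. \<forall>b\<in>B. \<phi> (\<alpha> g b) = \<phi> b"
    and phi1_ext: "\<forall>g. \<forall>b\<in>B. g \<noteq> 0 \<longrightarrow> \<phi> (b * u g) = 0"
    and A2_sub: "cstar_sub star iu A2"
    and A2_nontriv: "A2 \<noteq> range (sc iu)"
    and phi2_faithful: "faithful_state star iu A2 \<phi>"
    and A_def: "A = cgen star iu (A1 \<union> A2)"
    and phi_state: "is_state star iu A \<phi>"
    and phi_gns: "gns_faithful star A \<phi>"
    and phi_free: "free_pair \<phi> A1 A2"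
begin

lemma A_sub: "cstar_sub star iu A" unfolding A_def by (rule cgen_sub)

sublocale ph: cstate star iu A \<phi>
  by unfold_locales (rule A_sub, rule phi_state)

lemma B_sub: "cstar_sub star iu B" using cp by (simp add: reduced_crossed_product_def)
lemma act: "star_action star iu B \<alpha>" using cp by (simp add: reduced_crossed_product_def)
lemma u_unit: "star (u g) * u g = 1" "u g * star (u g) = 1"
  using cp by (simp_all add: reduced_crossed_product_def)
lemma u_add: "u (g + h) = u g * u h" using cp by (simp add: reduced_crossed_product_def)
lemma u_cov: "b \<in> B \<Longrightarrow> u g * b * star (u g) = \<alpha> g b" using cp by (simp add: reduced_crossed_product_def)
lemma A1_def: "A1 = cgen star iu (B \<union> range u)" using cp by (simp add: reduced_crossed_product_def)
lemma alpha_B: "b \<in> B \<Longrightarrow> \<alpha> g b \<in> B"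
  using act unfolding star_action_def bij_betw_def by blast

lemma A1_sub: "cstar_sub star iu A1" unfolding A1_def by (rule cgen_sub)
lemma B_A1: "B \<subseteq> A1" unfolding A1_def using cgen_incl[of "B \<union> range u"] by (simp only: Un_subset_iff)
lemma u_A1: "u g \<in> A1" unfolding A1_def using cgen_incl[of "B \<union> range u"] by (simp add: subset_iff)
lemma A1_A: "A1 \<subseteq> A" unfolding A_def using cgen_incl[of "A1 \<union> A2"] by (simp only: Un_subset_iff)
lemma A2_A: "A2 \<subseteq> A" unfolding A_def using cgen_incl[of "A1 \<union> A2"] by (simp only: Un_subset_iff)
lemma u_A: "u g \<in> A" using u_A1 A1_A by blast
lemma B_A: "B \<subseteq> A" using B_A1 A1_A by blast

lemma u0: "u 0 = 1"
proof -
  have e: "u 0 = u 0 * u 0" using u_add[of 0 0] by (metis add_0)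
  have "1 = star (u 0) * u 0" by (simp only: u_unit)
  also have "\<dots> = star (u 0) * (u 0 * u 0)" by (subst e) (rule refl)
  also have "\<dots> = (star (u 0) * u 0) * u 0" by (simp only: mult.assoc)
  also have "\<dots> = u 0" by (simp only: u_unit mult_1_left)
  finally show ?thesis by (rule sym)
qed

lemma u_star: "star (u g) = u (- g)"
proof -
  have e: "u g * u (- g) = 1" using u_add[of g "- g"] u0 by (metis add.right_inverse)
  have "star (u g) = star (u g) * (u g * u (- g))" by (simp only: e mult_1_right)
  also have "\<dots> = (star (u g) * u g) * u (- g)" by (simp only: mult.assoc)
  also have "\<dots> = u (- g)" by (simp only: u_unit mult_1_left)
  finally show ?thesis .
qed

lemma u_comm_B: "b \<in> B \<Longrightarrow> u g * b = \<alpha> g b * u g"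
proof -
  assume b: "b \<in> B"
  have "\<alpha> g b * u g = (u g * b * star (u g)) * u g" using u_cov[OF b] by simp
  also have "\<dots> = u g * b * (star (u g) * u g)" by (simp only: mult.assoc)
  finally show ?thesis by (simp add: u_unit)
qed

lemma norm_u: "norm (u g) = 1"
proof -
  have "(norm (u g))^2 = 1" using cstar_id[of "u g"] u_unit by simp
  then show ?thesis by (simp add: power2_eq_1_iff) (use norm_ge_zero[of "u g"] in linarith)
qed

lemma phi_mono0: "b \<in> B \<Longrightarrow> g \<noteq> 0 \<Longrightarrow> \<phi> (b * u g) = 0" using phi1_ext by blast
lemma phi_inv: "b \<in> B \<Longrightarrow> \<phi> (\<alpha> g b) = \<phi> b" using phi1_inv by blast

definition "M = {b * u h | b h. b \<in> B}"

lemma M_A1: "m \<in> M \<Longrightarrow> m \<in> A1"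
  unfolding M_def using B_A1 u_A1 csub_mult[OF A1_sub] by blast
lemma M_A: "m \<in> M \<Longrightarrow> m \<in> A" using M_A1 A1_A by blast
lemma B_M: "b \<in> B \<Longrightarrow> b \<in> M" unfolding M_def using u0 by (metis (mono_tags, lifting) mem_Collect_eq mult_1_right)
lemma u_M: "u h \<in> M" unfolding M_def using csub_1[OF B_sub] by force
lemma M_mult: "m1 \<in> M \<Longrightarrow> m2 \<in> M \<Longrightarrow> m1 * m2 \<in> M"
proof -
  assume "m1 \<in> M" "m2 \<in> M"
  then obtain b h b' k where m: "m1 = b * u h" "m2 = b' * u k" "b \<in> B" "b' \<in> B" unfolding M_def by blast
  have "m1 * m2 = b * (u h * b') * u k" using m by (simp add: mult.assoc)
  also have "\<dots> = (b * \<alpha> h b') * u (h + k)" using m by (simp add: u_comm_B u_add mult.assoc)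
  finally show ?thesis unfolding M_def using m csub_mult[OF B_sub] alpha_B by blast
qed
lemma M_star: "m \<in> M \<Longrightarrow> star m \<in> M"
proof -
  assume "m \<in> M"
  then obtain b h where m: "m = b * u h" "b \<in> B" unfolding M_def by blast
  have "star m = u (- h) * star b" using m by (simp add: star_mult u_star)
  also have "\<dots> = \<alpha> (- h) (star b) * u (- h)" using m csub_star[OF B_sub] by (simp add: u_comm_B)
  finally show ?thesis unfolding M_def using m csub_star[OF B_sub] alpha_B by blast
qed
lemma M_center: "m \<in> M \<Longrightarrow> m - sc iu (\<phi> m) \<in> M"
proof -
  assume "m \<in> M"
  then obtain b h where m: "m = b * u h" "b \<in> B" unfolding M_def by blast
  show ?thesis
  proof (cases "h = 0")
    case True
    then have "m - sc iu (\<phi> m) = b - sc iu (\<phi> m)" using m u0 by simp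
    moreover have "b - sc iu (\<phi> m) \<in> B" using m csub_diff[OF B_sub] csub_scal[OF B_sub] by blast
    ultimately show ?thesis using B_M by simp
  next
    case False
    then have "\<phi> m = 0" using m phi_mono0 by simp
    then show ?thesis using \<open>m \<in> M\<close> by simp
  qed
qed

lemma M_left: "m \<in> M \<Longrightarrow> \<exists>h. \<forall>g. g \<noteq> h \<longrightarrow> \<phi> (u g * m) = 0"
proof -
  assume "m \<in> M"
  then obtain b h where m: "m = b * u h" "b \<in> B" unfolding M_def by blast
  have "\<phi> (u g * m) = 0" if "g \<noteq> - h" for g
  proof -
    have "u g * m = \<alpha> g b * u (g + h)" using m by (simp add: mult.assoc[symmetric] u_comm_B u_add)
    moreover have "g + h \<noteq> 0" using that by (metis add.commute add_minus_cancel add_uminus_conv_diff diff_0 eq_neg_iff_add_eq_0)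
    ultimately show ?thesis using phi_mono0 alpha_B m by simp
  qed
  then show ?thesis by blast
qed

lemma M_right: "m \<in> M \<Longrightarrow> \<exists>h. \<forall>g. g \<noteq> h \<longrightarrow> \<phi> (m * star (u g)) = 0"
proof -
  assume "m \<in> M"
  then obtain b h where m: "m = b * u h" "b \<in> B" unfolding M_def by blast
  have "\<phi> (m * star (u g)) = 0" if "g \<noteq> h" for g
  proof -
    have "m * star (u g) = b * (u h * u (- g))" using m by (simp add: mult.assoc u_star)
    also have "u h * u (- g) = u (h + - g)" by (rule u_add[symmetric])
    finally have "m * star (u g) = b * u (h + - g)" .
    moreover have "h + - g \<noteq> 0" using that by (metis add_uminus_conv_diff right_minus_eq)
    ultimately show ?thesis using phi_mono0 m by simp
  qed
  then show ?thesis by blast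
qed

lemma M_conj: "m \<in> M \<Longrightarrow> \<phi> (u g * m * star (u g)) = \<phi> m"
proof -
  assume "m \<in> M"
  then obtain b h where m: "m = b * u h" "b \<in> B" unfolding M_def by blast
  have e: "u g * m * star (u g) = \<alpha> g b * u (g + h + - g)"
  proof -
    have "u g * m * star (u g) = (u g * b) * (u h * u (- g))" using m by (simp add: mult.assoc u_star)
    also have "\<dots> = \<alpha> g b * (u g * u (h + - g))" using m by (simp add: u_comm_B u_add[symmetric] mult.assoc)
    also have "u g * u (h + - g) = u (g + h + - g)" by (metis u_add add.assoc)
    finally show ?thesis by (simp add: mult.assoc)
  qed
  show ?thesis
  proof (cases "h = 0")
    case True
    then show ?thesis unfolding e using m u0 phi_inv by simp
  next
    case False
    then have "g + h + - g \<noteq> 0" by (metis add.assoc add.left_inverse add.right_neutral add_minus_cancel)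
    then show ?thesis unfolding e using m phi_mono0 alpha_B False by simp
  qed
qed

lemma M_conj_M: "m \<in> M \<Longrightarrow> u g * m * star (u g) \<in> M"
  using M_mult u_M M_star by blast

end

fun alt :: "(bool \<times> 'b) list \<Rightarrow> bool" where
  "alt [] = True"
| "alt [p] = True"
| "alt (p # q # r) = (fst p \<noteq> fst q \<and> alt (q # r))"

lemma alt_Cons: "alt (x # xs) \<longleftrightarrow> alt xs \<and> (xs \<noteq> [] \<longrightarrow> fst x \<noteq> fst (hd xs))"
  by (cases xs) auto

lemma alt_append: "alt (xs @ ys) \<longleftrightarrow> alt xs \<and> alt ys \<and> (xs \<noteq> [] \<longrightarrow> ys \<noteq> [] \<longrightarrow> fst (last xs) \<noteq> fst (hd ys))"
proof (induction xs)
  case (Cons x xs)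
  show ?case
  proof (cases xs)
    case Nil then show ?thesis by (simp add: alt_Cons)
  next
    case (Cons y zs)
    then show ?thesis using Cons.IH by (auto simp: alt_Cons)
  qed
qed simp

lemma alt_nth: "alt ws \<longleftrightarrow> (\<forall>i. Suc i < length ws \<longrightarrow> fst (ws ! i) \<noteq> fst (ws ! Suc i))"
proof (induction ws rule: alt.induct)
  case (3 p q r)
  have "(\<forall>i. Suc i < length (p # q # r) \<longrightarrow> fst ((p # q # r) ! i) \<noteq> fst ((p # q # r) ! Suc i))
     \<longleftrightarrow> fst p \<noteq> fst q \<and> (\<forall>i. Suc i < length (q # r) \<longrightarrow> fst ((q # r) ! i) \<noteq> fst ((q # r) ! Suc i))"
    (is "?L \<longleftrightarrow> ?R")
  proof
    assume L: ?L
    show ?R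
    proof
      show "fst p \<noteq> fst q" using L[rule_format, of 0] by simp
      show "\<forall>i. Suc i < length (q # r) \<longrightarrow> fst ((q # r) ! i) \<noteq> fst ((q # r) ! Suc i)"
        using L by (metis Suc_less_eq length_Cons nth_Cons_Suc)
    qed
  next
    assume R: ?R
    show ?L
    proof (intro allI impI)
      fix i assume i: "Suc i < length (p # q # r)"
      show "fst ((p # q # r) ! i) \<noteq> fst ((p # q # r) ! Suc i)"
      proof (cases i)
        case 0 then show ?thesis using R by simp
      next
        case (Suc j) then show ?thesis using R i by (metis Suc_less_eq length_Cons nth_Cons_Suc)
      qed
    qed
  qed
  then show ?case using "3.IH" by simp
qed auto

definition pw :: "(bool \<times> 'a::monoid_mult) list \<Rightarrow> 'a" where "pw ws = prod_list (map snd ws)"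

lemma pw_Nil[simp]: "pw [] = 1" by (simp add: pw_def)
lemma pw_Cons[simp]: "pw (p # ws) = snd p * pw ws" by (simp add: pw_def)
lemma pw_append[simp]: "pw (xs @ ys) = pw xs * pw ys" by (simp add: pw_def)

context mainloc
begin

definition lett :: "bool \<Rightarrow> 'a \<Rightarrow> bool" where
  "lett k x \<longleftrightarrow> (if k then x \<in> M else x \<in> A2) \<and> \<phi> x = 0"

definition isw :: "(bool \<times> 'a) list \<Rightarrow> bool" where
  "isw ws \<longleftrightarrow> ws \<noteq> [] \<and> alt ws \<and> (\<forall>p\<in>set ws. lett (fst p) (snd p))"

lemma lett_A: "lett k x \<Longrightarrow> x \<in> A"
  unfolding lett_def using M_A A2_A by (auto split: if_splits)

lemma pw_A: "\<forall>p\<in>set ws. lett (fst p) (snd p) \<Longrightarrow> pw ws \<in> A"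
proof (induction ws)
  case Nil then show ?case by (simp add: csub_1[OF A_sub])
next
  case (Cons p ws)
  then show ?case using lett_A[of "fst p" "snd p"] csub_mult[OF A_sub] by simp
qed

lemma isw_A: "isw ws \<Longrightarrow> pw ws \<in> A" unfolding isw_def by (simp add: pw_A)

lemma isw_phi: assumes "isw ws" shows "\<phi> (pw ws) = 0"
proof -
  have w: "ws \<noteq> []" "alt ws" "\<forall>p\<in>set ws. lett (fst p) (snd p)" using assms by (auto simp: isw_def)
  have cond: "map snd ws \<noteq> [] \<and> length (map fst ws) = length (map snd ws) \<and>
      (\<forall>i<length (map snd ws). (if map fst ws ! i then map snd ws ! i \<in> A1 else map snd ws ! i \<in> A2) \<and> \<phi> (map snd ws ! i) = 0) \<and>
      (\<forall>i. Suc i < length (map snd ws) \<longrightarrow> map fst ws ! i \<noteq> map fst ws ! Suc i)"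
  proof (intro conjI allI impI)
    show "map snd ws \<noteq> []" using w by simp
    show "length (map fst ws) = length (map snd ws)" by simp
    fix i assume i: "i < length (map snd ws)"
    then have l: "lett (fst (ws ! i)) (snd (ws ! i))" using w(3) by (simp add: nth_mem)
    then show "(if map fst ws ! i then map snd ws ! i \<in> A1 else map snd ws ! i \<in> A2)"
      using i M_A1 by (auto simp: lett_def split: if_splits)
    show "\<phi> (map snd ws ! i) = 0" using l i by (simp add: lett_def)
  next
    fix i assume "Suc i < length (map snd ws)"
    then show "map fst ws ! i \<noteq> map fst ws ! Suc i" using w(2) alt_nth by fastforce
  qed
  note f = phi_free[unfolded free_pair_def]
  have "\<phi> (prod_list (map snd ws)) = 0"
    using f[rule_format, OF cond] by simp
  then show ?thesis by (simp add: pw_def)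
qed

lemma isw_append: "isw xs \<Longrightarrow> isw ys \<Longrightarrow> fst (last xs) \<noteq> fst (hd ys) \<Longrightarrow> isw (xs @ ys)"
  unfolding isw_def by (auto simp: alt_append)

lemma isw_single: "lett k x \<Longrightarrow> isw [(k, x)]" unfolding isw_def by simp

lemma isw_snoc: assumes "isw (r @ [q])" "r \<noteq> []"
  shows "isw r" "fst (last r) \<noteq> fst q" "lett (fst q) (snd q)"
  using assms unfolding isw_def by (auto simp: alt_append)

lemma isw_cons: assumes "isw (p # r)" "r \<noteq> []"
  shows "isw r" "fst p \<noteq> fst (hd r)" "lett (fst p) (snd p)"
  using assms unfolding isw_def by (auto simp: alt_Cons)

lemma isw_cons_snoc: assumes "isw (p # r @ [q])" "r \<noteq> []"
  shows "isw r" "fst p \<noteq> fst (hd r)" "fst (last r) \<noteq> fst q" "lett (fst p) (snd p)" "lett (fst q) (snd q)"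
  using assms unfolding isw_def by (auto simp: alt_Cons alt_append)

lemma isw_pair: assumes "isw [p, q]" shows "fst p \<noteq> fst q" "lett (fst p) (snd p)" "lett (fst q) (snd q)"
  using assms unfolding isw_def by auto

lemma list_split3: "xs \<noteq> [] \<Longrightarrow> (\<exists>p. xs = [p]) \<or> (\<exists>p r q. xs = p # r @ [q])"
  by (metis append_butlast_last_id butlast.simps(2) last_ConsL last_ConsR list.exhaust)

lemma list_snoc: "xs \<noteq> [] \<Longrightarrow> \<exists>r q. xs = r @ [q]"
  by (metis append_butlast_last_id)

lemma ev_ne: "eventually (\<lambda>g. g \<noteq> h) cofinite"
  by (simp add: eventually_cofinite)

lemma lett_u: "g \<noteq> 0 \<Longrightarrow> lett True (u g) \<and> lett True (star (u g))"
proof -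
  assume g: "g \<noteq> 0"
  have "\<phi> (u g) = 0" using phi_mono0[OF csub_1[OF B_sub] g] by simp
  moreover have "\<phi> (star (u g)) = 0" using phi_mono0[OF csub_1[OF B_sub], of "- g"] g by (simp add: u_star)
  ultimately show ?thesis unfolding lett_def using u_M by (simp add: u_star)
qed

lemma ev_LP: assumes "lett k x"
  shows "eventually (\<lambda>g. \<exists>L. pw L = u g * x \<and> isw L \<and> fst (hd L) = True \<and> fst (last L) = k) cofinite"
proof (cases k)
  case True
  then have xM: "x \<in> M" using assms by (simp add: lett_def)
  obtain h where h: "\<forall>g. g \<noteq> h \<longrightarrow> \<phi> (u g * x) = 0" using M_left[OF xM] by blast
  show ?thesis
  proof (rule eventually_mono[OF ev_ne[of h]])
    fix g assume "g \<noteq> h"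
    then have "lett True (u g * x)" using h M_mult[OF u_M xM] by (simp add: lett_def)
    then show "\<exists>L. pw L = u g * x \<and> isw L \<and> fst (hd L) = True \<and> fst (last L) = k"
      using True by (intro exI[of _ "[(True, u g * x)]"]) (simp add: isw_single)
  qed
next
  case False
  show ?thesis
  proof (rule eventually_mono[OF ev_ne[of 0]])
    fix g :: 'g assume "g \<noteq> 0"
    then have "isw [(True, u g), (False, x)]" using lett_u assms False unfolding isw_def by auto
    then show "\<exists>L. pw L = u g * x \<and> isw L \<and> fst (hd L) = True \<and> fst (last L) = k"
      using False by (intro exI[of _ "[(True, u g), (False, x)]"]) simp
  qed
qed

lemma ev_RQ: assumes "lett k x"
  shows "eventually (\<lambda>g. \<exists>L. pw L = x * star (u g) \<and> isw L \<and> fst (last L) = True \<and> fst (hd L) = k) cofinite"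
proof (cases k)
  case True
  then have xM: "x \<in> M" using assms by (simp add: lett_def)
  obtain h where h: "\<forall>g. g \<noteq> h \<longrightarrow> \<phi> (x * star (u g)) = 0" using M_right[OF xM] by blast
  show ?thesis
  proof (rule eventually_mono[OF ev_ne[of h]])
    fix g assume "g \<noteq> h"
    then have "lett True (x * star (u g))" using h M_mult[OF xM M_star[OF u_M]] by (simp add: lett_def)
    then show "\<exists>L. pw L = x * star (u g) \<and> isw L \<and> fst (last L) = True \<and> fst (hd L) = k"
      using True by (intro exI[of _ "[(True, x * star (u g))]"]) (simp add: isw_single)
  qed
next
  case False
  show ?thesis
  proof (rule eventually_mono[OF ev_ne[of 0]])
    fix g :: 'g assume "g \<noteq> 0"
    then have "isw [(False, x), (True, star (u g))]" using lett_u assms False unfolding isw_def by auto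
    then show "\<exists>L. pw L = x * star (u g) \<and> isw L \<and> fst (last L) = True \<and> fst (hd L) = k"
      using False by (intro exI[of _ "[(False, x), (True, star (u g))]"]) simp
  qed
qed

lemma ev_CONJ: assumes "lett k x"
  shows "eventually (\<lambda>g. \<exists>L. pw L = u g * x * star (u g) \<and> isw L \<and> fst (hd L) = True \<and> fst (last L) = True) cofinite"
proof (cases k)
  case True
  then have xM: "x \<in> M" "\<phi> x = 0" using assms by (simp_all add: lett_def)
  show ?thesis
  proof (rule always_eventually, intro allI)
    fix g
    have "lett True (u g * x * star (u g))" using M_conj_M[OF xM(1)] M_conj[OF xM(1)] xM(2) by (simp add: lett_def)
    then show "\<exists>L. pw L = u g * x * star (u g) \<and> isw L \<and> fst (hd L) = True \<and> fst (last L) = True"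
      by (intro exI[of _ "[(True, u g * x * star (u g))]"]) (simp add: isw_single)
  qed
next
  case False
  show ?thesis
  proof (rule eventually_mono[OF ev_ne[of 0]])
    fix g :: 'g assume "g \<noteq> 0"
    then have "isw [(True, u g), (False, x), (True, star (u g))]" using lett_u assms False unfolding isw_def by auto
    then show "\<exists>L. pw L = u g * x * star (u g) \<and> isw L \<and> fst (hd L) = True \<and> fst (last L) = True"
      by (intro exI[of _ "[(True, u g), (False, x), (True, star (u g))]"]) (simp add: mult.assoc)
  qed
qed

definition "Gen = insert 1 {pw ws | ws. isw ws}"

lemma Gen_A: "x \<in> Gen \<Longrightarrow> x \<in> A"
  unfolding Gen_def using csub_1[OF A_sub] isw_A by auto

lemma Gen_phi: "x \<in> Gen \<Longrightarrow> x \<noteq> 1 \<Longrightarrow> \<phi> x = 0"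
  unfolding Gen_def using isw_phi by auto

lemma ev_LEFT: assumes "v \<in> Gen"
  shows "eventually (\<lambda>g. \<exists>L. pw L = v * star (u g) \<and> isw L \<and> fst (last L) = True) cofinite"
proof (cases "v = 1")
  case True
  show ?thesis
  proof (rule eventually_mono[OF ev_ne[of 0]])
    fix g :: 'g assume "g \<noteq> 0"
    then show "\<exists>L. pw L = v * star (u g) \<and> isw L \<and> fst (last L) = True"
      using lett_u True by (intro exI[of _ "[(True, star (u g))]"]) (simp add: isw_single)
  qed
next
  case False
  then obtain vs where vs: "v = pw vs" "isw vs" using assms unfolding Gen_def by auto
  have "vs \<noteq> []" using vs by (simp add: isw_def)
  then obtain r q where rq: "vs = r @ [q]" using list_snoc by blast
  show ?thesis
  proof (cases "r = []")
    case True
    then have q: "lett (fst q) (snd q)" using vs rq by (simp add: isw_def)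
    show ?thesis
    proof (rule eventually_mono[OF ev_RQ[OF q]])
      fix g assume "\<exists>L. pw L = snd q * star (u g) \<and> isw L \<and> fst (last L) = True \<and> fst (hd L) = fst q"
      then show "\<exists>L. pw L = v * star (u g) \<and> isw L \<and> fst (last L) = True"
        using vs rq True by auto
    qed
  next
    case False
    note r = isw_snoc[OF vs(2)[unfolded rq] False]
    show ?thesis
    proof (rule eventually_mono[OF ev_RQ[OF r(3)]])
      fix g assume "\<exists>L. pw L = snd q * star (u g) \<and> isw L \<and> fst (last L) = True \<and> fst (hd L) = fst q"
      then obtain L where L: "pw L = snd q * star (u g)" "isw L" "fst (last L) = True" "fst (hd L) = fst q" by blast
      have "isw (r @ L)" using isw_append[OF r(1) L(2)] r(2) L(4) by simp
      moreover have "pw (r @ L) = v * star (u g)" using vs rq L(1) by (simp add: mult.assoc)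
      moreover have "fst (last (r @ L)) = True" using L(2,3) by (simp add: isw_def)
      ultimately show "\<exists>L. pw L = v * star (u g) \<and> isw L \<and> fst (last L) = True" by blast
    qed
  qed
qed

lemma ev_RIGHT: assumes "w \<in> Gen"
  shows "eventually (\<lambda>g. \<exists>R. pw R = u g * w \<and> isw R \<and> fst (hd R) = True) cofinite"
proof (cases "w = 1")
  case True
  show ?thesis
  proof (rule eventually_mono[OF ev_ne[of 0]])
    fix g :: 'g assume "g \<noteq> 0"
    then show "\<exists>R. pw R = u g * w \<and> isw R \<and> fst (hd R) = True"
      using lett_u True by (intro exI[of _ "[(True, u g)]"]) (simp add: isw_single)
  qed
next
  case False
  then obtain ws where ws: "w = pw ws" "isw ws" using assms unfolding Gen_def by auto
  then obtain p r where pr: "ws = p # r" by (cases ws) (auto simp: isw_def)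
  show ?thesis
  proof (cases "r = []")
    case True
    then have p: "lett (fst p) (snd p)" using ws pr by (simp add: isw_def)
    show ?thesis
    proof (rule eventually_mono[OF ev_LP[OF p]])
      fix g assume "\<exists>L. pw L = u g * snd p \<and> isw L \<and> fst (hd L) = True \<and> fst (last L) = fst p"
      then show "\<exists>R. pw R = u g * w \<and> isw R \<and> fst (hd R) = True"
        using ws pr True by auto
    qed
  next
    case False
    note r = isw_cons[OF ws(2)[unfolded pr] False]
    show ?thesis
    proof (rule eventually_mono[OF ev_LP[OF r(3)]])
      fix g assume "\<exists>L. pw L = u g * snd p \<and> isw L \<and> fst (hd L) = True \<and> fst (last L) = fst p"
      then obtain L where L: "pw L = u g * snd p" "isw L" "fst (hd L) = True" "fst (last L) = fst p" by blast
      have "isw (L @ r)" using isw_append[OF L(2) r(1)] r(2) L(4) by simp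
      moreover have "pw (L @ r) = u g * w" using ws pr L(1) by (simp add: mult.assoc)
      moreover have "fst (hd (L @ r)) = True" using L(2,3) by (simp add: isw_def)
      ultimately show "\<exists>R. pw R = u g * w \<and> isw R \<and> fst (hd R) = True" by blast
    qed
  qed
qed

lemma ev_MID: assumes "isw zs0"
  shows "eventually (\<lambda>g. \<exists>Md. pw Md = u g * pw zs0 * star (u g) \<and> isw Md \<and> fst (hd Md) = True \<and> fst (last Md) = True) cofinite"
proof -
  have "zs0 \<noteq> []" using assms by (simp add: isw_def)
  then consider p where "zs0 = [p]" | p r q where "zs0 = p # r @ [q]" using list_split3 by blast
  then show ?thesis
  proof cases
    case 1
    then have p: "lett (fst p) (snd p)" using assms by (simp add: isw_def)
    show ?thesis using ev_CONJ[OF p] by (rule eventually_mono) (use 1 in simp)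
  next
    case 2
    note zs0 = 2
    show ?thesis
    proof (cases "r = []")
      case True
      then have pq: "fst p \<noteq> fst q" "lett (fst p) (snd p)" "lett (fst q) (snd q)"
        using isw_pair[of p q] assms zs0 by auto
      show ?thesis
      proof (rule eventually_mono[OF eventually_conj[OF ev_LP[OF pq(2)] ev_RQ[OF pq(3)]]])
        fix g assume "(\<exists>L. pw L = u g * snd p \<and> isw L \<and> fst (hd L) = True \<and> fst (last L) = fst p) \<and>
          (\<exists>L. pw L = snd q * star (u g) \<and> isw L \<and> fst (last L) = True \<and> fst (hd L) = fst q)"
        then obtain L R where L: "pw L = u g * snd p" "isw L" "fst (hd L) = True" "fst (last L) = fst p"
          and R: "pw R = snd q * star (u g)" "isw R" "fst (last R) = True" "fst (hd R) = fst q" by blast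
        have "isw (L @ R)" using isw_append[OF L(2) R(2)] L(4) R(4) pq(1) by simp
        moreover have "pw (L @ R) = u g * pw zs0 * star (u g)" using L(1) R(1) zs0 True by (simp add: mult.assoc)
        moreover have "fst (hd (L @ R)) = True" "fst (last (L @ R)) = True" using L R by (auto simp: isw_def)
        ultimately show "\<exists>Md. pw Md = u g * pw zs0 * star (u g) \<and> isw Md \<and> fst (hd Md) = True \<and> fst (last Md) = True"
          by blast
      qed
    next
      case False
      note r = isw_cons_snoc[OF assms[unfolded zs0] False]
      show ?thesis
      proof (rule eventually_mono[OF eventually_conj[OF ev_LP[OF r(4)] ev_RQ[OF r(5)]]])
        fix g assume "(\<exists>L. pw L = u g * snd p \<and> isw L \<and> fst (hd L) = True \<and> fst (last L) = fst p) \<and>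
          (\<exists>L. pw L = snd q * star (u g) \<and> isw L \<and> fst (last L) = True \<and> fst (hd L) = fst q)"
        then obtain L R where L: "pw L = u g * snd p" "isw L" "fst (hd L) = True" "fst (last L) = fst p"
          and R: "pw R = snd q * star (u g)" "isw R" "fst (last R) = True" "fst (hd R) = fst q" by blast
        have "isw (r @ R)" using isw_append[OF r(1) R(2)] r(3) R(4) by simp
        moreover have "hd (r @ R) = hd r" using False by simp
        ultimately have "isw (L @ r @ R)" using isw_append[OF L(2)] L(4) r(2) by simp
        moreover have "pw (L @ r @ R) = u g * pw zs0 * star (u g)" using L(1) R(1) zs0 by (simp add: mult.assoc)
        moreover have "fst (hd (L @ r @ R)) = True" "fst (last (L @ r @ R)) = True" using L R by (auto simp: isw_def)
        ultimately show "\<exists>Md. pw Md = u g * pw zs0 * star (u g) \<and> isw Md \<and> fst (hd Md) = True \<and> fst (last Md) = True"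
          by blast
      qed
    qed
  qed
qed

lemma ev_STAR: assumes "v \<in> Gen" "w \<in> Gen"
  shows "eventually (\<lambda>g. \<forall>s. isw s \<and> fst (hd s) = False \<and> fst (last s) = False \<longrightarrow>
            \<phi> (v * star (u g) * pw s * u g * w) = 0) cofinite"
proof (rule eventually_mono[OF eventually_conj[OF ev_LEFT[OF assms(1)] ev_RIGHT[OF assms(2)]]])
  fix g assume "(\<exists>L. pw L = v * star (u g) \<and> isw L \<and> fst (last L) = True) \<and>
      (\<exists>R. pw R = u g * w \<and> isw R \<and> fst (hd R) = True)"
  then obtain L R where L: "pw L = v * star (u g)" "isw L" "fst (last L) = True"
    and R: "pw R = u g * w" "isw R" "fst (hd R) = True" by blast
  show "\<forall>s. isw s \<and> fst (hd s) = False \<and> fst (last s) = False \<longrightarrow> \<phi> (v * star (u g) * pw s * u g * w) = 0"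
  proof (intro allI impI)
    fix s assume s: "isw s \<and> fst (hd s) = False \<and> fst (last s) = False"
    have "isw (s @ R)" using isw_append[of s R] s R by simp
    moreover have "hd (s @ R) = hd s" using s by (simp add: isw_def)
    ultimately have "isw (L @ s @ R)" using isw_append[OF L(2), of "s @ R"] L(3) s by simp
    then have "\<phi> (pw (L @ s @ R)) = 0" by (rule isw_phi)
    moreover have "pw (L @ s @ R) = v * star (u g) * pw s * u g * w" using L(1) R(1) by (simp add: mult.assoc)
    ultimately show "\<phi> (v * star (u g) * pw s * u g * w) = 0" by simp
  qed
qed

end

context cs
begin
lemma sc_mid: "x * (sc iu c * y) = sc iu c * (x * y)"
proof -
  have "x * (sc iu c * y) = (x * sc iu c) * y" by (simp only: mult.assoc)
  also have "\<dots> = (sc iu c * x) * y" by (simp only: sc_comm)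
  finally show ?thesis by (simp only: mult.assoc)
qed
end

context mainloc
begin

lemma u_cancel1[simp]: "u g * (star (u g) * x) = x"
  by (simp add: mult.assoc[symmetric] u_unit)
lemma u_cancel2[simp]: "star (u g) * (u g * x) = x"
  by (simp add: mult.assoc[symmetric] u_unit)

lemma mA[intro]: "x \<in> A \<Longrightarrow> y \<in> A \<Longrightarrow> x * y \<in> A" by (rule csub_mult[OF A_sub])
lemma starA[intro]: "x \<in> A \<Longrightarrow> star x \<in> A" by (rule csub_star[OF A_sub])
lemma uA[intro]: "u g \<in> A" by (rule u_A)
lemma oneA[intro]: "1 \<in> A" by (rule csub_1[OF A_sub])
lemma A2A[intro]: "x \<in> A2 \<Longrightarrow> x \<in> A" using A2_A by blast

lemma step1:
  assumes a: "a \<in> A2" "\<phi> a = 0" and v: "v \<in> Gen" and c: "c \<in> Gen" and w: "w \<in> Gen"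
  shows "eventually (\<lambda>g. \<phi> (v * (star (u g) * star a * u g) * c * (star (u g) * a * u g) * w)
            = \<phi> (star a * a) * \<phi> c * \<phi> (v * w)) cofinite"
proof -
  define p where "p = \<phi> (star a * a)"
  define e where "e = star a * a - sc iu p"
  have aA: "a \<in> A" using a by auto
  have vA: "v \<in> A" and wA: "w \<in> A" and cA: "c \<in> A" using v w c Gen_A by auto
  have sa: "lett False (star a)"
    unfolding lett_def using a csub_star[OF A2_sub] ph.phi_star[OF aA] by simp
  have eA2: "e \<in> A2" unfolding e_def using a
    by (intro csub_diff[OF A2_sub] csub_mult[OF A2_sub] csub_star[OF A2_sub] csub_scal[OF A2_sub])
  have "\<phi> e = 0" unfolding e_def p_def
    using aA by (subst ph.phi_diff) (auto simp: csub_scal[OF A_sub] ph.phi_scal)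
  then have le: "lett False e" unfolding lett_def using eA2 by simp
  note STAR = ev_STAR[OF v w]
  show ?thesis
  proof (cases "c = 1")
    case True
    show ?thesis
    proof (rule eventually_mono[OF STAR])
      fix g assume H: "\<forall>s. isw s \<and> fst (hd s) = False \<and> fst (last s) = False \<longrightarrow> \<phi> (v * star (u g) * pw s * u g * w) = 0"
      have z: "\<phi> (v * star (u g) * e * u g * w) = 0"
        using H[rule_format, of "[(False, e)]"] isw_single[OF le] by simp
      have "v * (star (u g) * star a * u g) * c * (star (u g) * a * u g) * w
          = v * star (u g) * (sc iu p + e) * u g * w"
        using True by (simp add: e_def mult.assoc)
      also have "\<dots> = sc iu p * (v * w) + v * star (u g) * e * u g * w"
        by (simp add: distrib_left distrib_right mult.assoc sc_mid)
      finally have eq: "v * (star (u g) * star a * u g) * c * (star (u g) * a * u g) * w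
          = sc iu p * (v * w) + v * star (u g) * e * u g * w" .
      have eA: "e \<in> A" using eA2 by auto
      have "\<phi> (sc iu p * (v * w) + v * star (u g) * e * u g * w) = p * \<phi> (v * w)"
        using vA wA eA z by (simp add: ph.phi_add ph.phi_sc csub_sc[OF A_sub] mA starA uA)
      then show "\<phi> (v * (star (u g) * star a * u g) * c * (star (u g) * a * u g) * w)
            = \<phi> (star a * a) * \<phi> c * \<phi> (v * w)"
        unfolding eq using True by (simp add: p_def ph.phi_1)
    qed
  next
    case False
    then obtain zs where zs: "c = pw zs" "isw zs" using c unfolding Gen_def by auto
    have pc: "\<phi> c = 0" using isw_phi[OF zs(2)] zs by simp
    show ?thesis
    proof (rule eventually_mono[OF eventually_conj[OF STAR ev_MID[OF zs(2)]]])
      fix g assume "(\<forall>s. isw s \<and> fst (hd s) = False \<and> fst (last s) = False \<longrightarrow> \<phi> (v * star (u g) * pw s * u g * w) = 0) \<and>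
          (\<exists>Md. pw Md = u g * pw zs * star (u g) \<and> isw Md \<and> fst (hd Md) = True \<and> fst (last Md) = True)"
      then obtain Md where H: "\<forall>s. isw s \<and> fst (hd s) = False \<and> fst (last s) = False \<longrightarrow> \<phi> (v * star (u g) * pw s * u g * w) = 0"
        and Md: "pw Md = u g * pw zs * star (u g)" "isw Md" "fst (hd Md) = True" "fst (last Md) = True" by blast
      define s where "s = (False, star a) # Md @ [(False, a)]"
      have la: "lett False a" using a by (simp add: lett_def)
      have "isw (Md @ [(False, a)])" using isw_append[OF Md(2) isw_single[OF la]] Md(4) by simp
      moreover have "hd (Md @ [(False, a)]) = hd Md" using Md(2) by (simp add: isw_def)
      ultimately have "isw s" unfolding s_def using isw_append[OF isw_single[OF sa], of "Md @ [(False, a)]"] Md(3) by simp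
      moreover have "fst (hd s) = False" "fst (last s) = False" unfolding s_def by simp_all
      ultimately have "\<phi> (v * star (u g) * pw s * u g * w) = 0" using H by blast
      moreover have "v * star (u g) * pw s * u g * w = v * (star (u g) * star a * u g) * c * (star (u g) * a * u g) * w"
        unfolding s_def using Md(1) zs(1) by (simp add: mult.assoc)
      ultimately show "\<phi> (v * (star (u g) * star a * u g) * c * (star (u g) * a * u g) * w)
            = \<phi> (star a * a) * \<phi> c * \<phi> (v * w)" using pc by simp
    qed
  qed
qed

end

context cs
begin

inductive_set spn :: "'a set \<Rightarrow> 'a set" for X where
  spn_base: "x \<in> X \<Longrightarrow> x \<in> spn X"
| spn_zero: "0 \<in> spn X"
| spn_add: "x \<in> spn X \<Longrightarrow> y \<in> spn X \<Longrightarrow> x + y \<in> spn X"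
| spn_sc: "x \<in> spn X \<Longrightarrow> sc iu c * x \<in> spn X"

lemma spn_sub: "cstar_sub star iu S \<Longrightarrow> X \<subseteq> S \<Longrightarrow> spn X \<subseteq> S"
proof
  fix x assume S: "cstar_sub star iu S" and X: "X \<subseteq> S" and x: "x \<in> spn X"
  from x show "x \<in> S"
    by (induction rule: spn.induct) (use S X in \<open>auto simp: csub_0 csub_add csub_sc\<close>)
qed

lemma closure_csub:
  assumes one: "1 \<in> V" and add: "\<And>x y. x \<in> V \<Longrightarrow> y \<in> V \<Longrightarrow> x + y \<in> V"
    and mul: "\<And>x y. x \<in> V \<Longrightarrow> y \<in> V \<Longrightarrow> x * y \<in> V"
    and scm: "\<And>x c. x \<in> V \<Longrightarrow> sc iu c * x \<in> V" and st: "\<And>x. x \<in> V \<Longrightarrow> star x \<in> V"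
  shows "cstar_sub star iu (closure V)"
  unfolding cstar_sub_def
proof (intro conjI ballI allI)
  show "1 \<in> closure V" using one closure_subset by blast
  show "closed (closure V)" by simp
  fix x assume x: "x \<in> closure V"
  then obtain f where f: "\<forall>n. f n \<in> V" "f \<longlonglongrightarrow> x" unfolding closure_sequential by blast
  {
    fix y assume "y \<in> closure V"
    then obtain h where h: "\<forall>n. h n \<in> V" "h \<longlonglongrightarrow> y" unfolding closure_sequential by blast
    show "x + y \<in> closure V" unfolding closure_sequential
      using f h add by (intro exI[of _ "\<lambda>n. f n + h n"]) (auto intro: tendsto_add)
    show "x * y \<in> closure V" unfolding closure_sequential
      using f h mul by (intro exI[of _ "\<lambda>n. f n * h n"]) (auto intro: tendsto_mult)
  }
  fix c
  show "sc iu c * x \<in> closure V" unfolding closure_sequential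
    using f scm by (intro exI[of _ "\<lambda>n. sc iu c * f n"]) (auto intro: tendsto_mult tendsto_const)
  show "star x \<in> closure V" unfolding closure_sequential
    using f st bounded_linear.tendsto[OF bl_star f(2)] by (intro exI[of _ "\<lambda>n. star (f n)"]) auto
qed

lemma star_prod_list: "star (prod_list xs) = prod_list (rev (map star xs))"
  by (induction xs) (simp_all add: star_mult)

end

context mainloc
begin

definition cls :: "bool \<Rightarrow> 'a \<Rightarrow> bool" where "cls k x \<longleftrightarrow> (if k then x \<in> M else x \<in> A2)"

lemma cls_mult: "cls k x \<Longrightarrow> cls k y \<Longrightarrow> cls k (x * y)"
  unfolding cls_def using M_mult csub_mult[OF A2_sub] by (auto split: if_splits)
lemma cls_star: "cls k x \<Longrightarrow> cls k (star x)"
  unfolding cls_def using M_star csub_star[OF A2_sub] by (auto split: if_splits)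
lemma cls_A: "cls k x \<Longrightarrow> x \<in> A"
  unfolding cls_def using M_A A2_A by (auto split: if_splits)
lemma cls_cen: "cls k x \<Longrightarrow> lett k (x - sc iu (\<phi> x))"
proof -
  assume x: "cls k x"
  have xA: "x \<in> A" by (rule cls_A[OF x])
  have "\<phi> (x - sc iu (\<phi> x)) = 0" using xA by (simp add: ph.phi_diff csub_scal[OF A_sub] ph.phi_scal)
  moreover have "cls k (x - sc iu (\<phi> x))"
    using x M_center csub_diff[OF A2_sub] csub_scal[OF A2_sub] unfolding cls_def by (auto split: if_splits)
  ultimately show ?thesis unfolding lett_def cls_def by simp
qed
lemma lett_cls: "lett k x \<Longrightarrow> cls k x" unfolding lett_def cls_def by simp

abbreviation "V \<equiv> spn Gen"

lemma V_A: "V \<subseteq> A" using spn_sub[OF A_sub] Gen_A by blast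

lemma one_Gen: "1 \<in> Gen" unfolding Gen_def by simp
lemma isw_Gen: "isw ws \<Longrightarrow> pw ws \<in> Gen" unfolding Gen_def by blast

lemma helper: assumes y: "cls k y" and r: "r = [] \<or> (isw r \<and> fst (hd r) \<noteq> k)"
  shows "y * pw r \<in> V"
proof -
  define y0 where "y0 = y - sc iu (\<phi> y)"
  have l: "lett k y0" unfolding y0_def by (rule cls_cen[OF y])
  have e: "y * pw r = sc iu (\<phi> y) * pw r + pw ((k, y0) # r)" unfolding y0_def
    by (simp add: algebra_simps)
  have g1: "pw r \<in> Gen" using r one_Gen isw_Gen by auto
  have "isw ((k, y0) # r)"
    using r isw_single[OF l] isw_append[OF isw_single[OF l], of r] by auto
  then have g2: "pw ((k, y0) # r) \<in> Gen" by (rule isw_Gen)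
  show ?thesis unfolding e using g1 g2 by (intro spn_add spn_sc spn_base)
qed

lemma mult_gen: assumes l: "cls k l" and z: "z \<in> Gen" shows "l * z \<in> V"
proof (cases "z = 1")
  case True then show ?thesis using helper[OF l, of "[]"] by simp
next
  case False
  then obtain ws where ws: "z = pw ws" "isw ws" using z unfolding Gen_def by auto
  then obtain k1 w1 r where pr: "ws = (k1, w1) # r" by (cases ws) (auto simp: isw_def)
  show ?thesis
  proof (cases "k1 = k")
    case False
    then show ?thesis using helper[OF l, of ws] ws pr by simp
  next
    case True
    have "lett k1 w1" using ws pr by (simp add: isw_def)
    then have c1: "cls k (l * w1)" using cls_mult[OF l] lett_cls True by blast
    have r: "r = [] \<or> (isw r \<and> fst (hd r) \<noteq> k)"
      using isw_cons[of "(k1, w1)" r] ws pr True by auto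
    have "l * z = (l * w1) * pw r" using ws pr by (simp add: mult.assoc)
    then show ?thesis using helper[OF c1 r] by simp
  qed
qed

lemma mult_V: assumes l: "cls k l" and z: "z \<in> V" shows "l * z \<in> V"
  using z
proof (induction rule: spn.induct)
  case (spn_base x) then show ?case by (rule mult_gen[OF l])
next
  case spn_zero then show ?case by (simp add: spn.spn_zero)
next
  case (spn_add x y) then show ?case by (simp add: distrib_left spn.spn_add)
next
  case (spn_sc x c) then show ?case by (simp add: sc_mid spn.spn_sc)
qed

lemma prodL_V: "\<forall>x\<in>set xs. \<exists>k. cls k x \<Longrightarrow> z \<in> V \<Longrightarrow> prod_list xs * z \<in> V"
proof (induction xs)
  case (Cons x xs)
  then obtain k where "cls k x" by auto
  then show ?case using Cons mult_V by (simp add: mult.assoc)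
qed simp

lemma one_V: "1 \<in> V" using one_Gen by (rule spn_base)

lemma Gen_letters: "x \<in> Gen \<Longrightarrow> \<exists>xs. x = prod_list xs \<and> (\<forall>y\<in>set xs. \<exists>k. cls k y)"
proof -
  assume "x \<in> Gen"
  then consider "x = 1" | ws where "x = pw ws" "isw ws" unfolding Gen_def by auto
  then show ?thesis
  proof cases
    case 1 then show ?thesis by (intro exI[of _ "[]"]) simp
  next
    case 2 then show ?thesis
      by (intro exI[of _ "map snd ws"]) (auto simp: pw_def isw_def intro: lett_cls)
  qed
qed

lemma V_mult: assumes x: "x \<in> V" and y: "y \<in> V" shows "x * y \<in> V"
  using x
proof (induction rule: spn.induct)
  case (spn_base x)
  then obtain xs where "x = prod_list xs" "\<forall>y\<in>set xs. \<exists>k. cls k y" using Gen_letters by blast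
  then show ?case using prodL_V y by simp
next
  case spn_zero then show ?case by (simp add: spn.spn_zero)
next
  case (spn_add x z) then show ?case by (simp add: distrib_right spn.spn_add)
next
  case (spn_sc x c) then show ?case by (simp add: mult.assoc spn.spn_sc)
qed

lemma V_star: assumes x: "x \<in> V" shows "star x \<in> V"
  using x
proof (induction rule: spn.induct)
  case (spn_base x)
  then obtain xs where xs: "x = prod_list xs" "\<forall>y\<in>set xs. \<exists>k. cls k y" using Gen_letters by blast
  have "\<forall>y\<in>set (rev (map star xs)). \<exists>k. cls k y" using xs(2) cls_star by fastforce
  then have "prod_list (rev (map star xs)) * 1 \<in> V" using prodL_V one_V by blast
  then show ?case using xs(1) by (simp add: star_prod_list)
next
  case spn_zero then show ?case by (simp add: spn.spn_zero)
next
  case (spn_add x z) then show ?case by (simp add: star_add spn.spn_add)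
next
  case (spn_sc x c) then show ?case by (simp add: star_sc_mult spn.spn_sc)
qed

lemma clV: "cstar_sub star iu (closure V)"
  by (rule closure_csub[OF one_V spn_add V_mult spn_sc V_star])

lemma letter_V: "cls k x \<Longrightarrow> x \<in> V" using mult_V[OF _ one_V] by fastforce

lemma A_clV: "A \<subseteq> closure V"
proof -
  have "B \<union> range u \<subseteq> closure V"
    using letter_V[of True] B_M u_M closure_subset[of V] unfolding cls_def by auto
  then have "A1 \<subseteq> closure V" unfolding A1_def by (rule cgen_least[OF clV])
  moreover have "A2 \<subseteq> closure V" using letter_V[of False] closure_subset unfolding cls_def by auto
  ultimately show ?thesis unfolding A_def by (intro cgen_least[OF clV]) auto
qed

end

context mainloc
begin

lemma ext1:
  assumes add: "\<And>g x y. x \<in> A \<Longrightarrow> y \<in> A \<Longrightarrow> \<Phi> g (x + y) = \<Phi> g x + \<Phi> g y"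
    and hom: "\<And>g x c. x \<in> A \<Longrightarrow> \<Phi> g (sc iu c * x) = c * \<Phi> g x"
    and bd: "\<And>g x. x \<in> A \<Longrightarrow> cmod (\<Phi> g x) \<le> K * norm x"
    and gen: "\<And>x. x \<in> Gen \<Longrightarrow> ((\<lambda>g. \<Phi> g x) \<longlongrightarrow> 0) cofinite"
    and z: "z \<in> A"
  shows "((\<lambda>g. \<Phi> g z) \<longlongrightarrow> 0) cofinite"
proof -
  have V: "((\<lambda>g. \<Phi> g x) \<longlongrightarrow> 0) cofinite" if "x \<in> V" for x
    using that
  proof (induction rule: spn.induct)
    case (spn_base x) then show ?case by (rule gen)
  next
    case spn_zero
    have "\<Phi> g 0 = 0" for g using hom[of 0 g 0] csub_0[OF A_sub] by simp
    then show ?case by simp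
  next
    case (spn_add x y)
    have "x \<in> A" "y \<in> A" using spn_add.hyps V_A by auto
    then have "\<Phi> g (x + y) = \<Phi> g x + \<Phi> g y" for g by (rule add)
    then show ?case using tendsto_add[OF spn_add.IH] by simp
  next
    case (spn_sc x c)
    have "x \<in> A" using spn_sc.hyps V_A by auto
    then have "\<Phi> g (sc iu c * x) = c * \<Phi> g x" for g by (rule hom)
    then show ?case using tendsto_mult[OF tendsto_const[of c] spn_sc.IH] by simp
  qed
  show ?thesis unfolding tendsto_iff
  proof (intro allI impI)
    fix e :: real assume e: "e > 0"
    define K' where "K' = \<bar>K\<bar> + 1"
    have K': "K' > 0" unfolding K'_def by simp
    have "e / (2 * K') > 0" using e K' by simp
    moreover have "\<forall>\<epsilon>>0. \<exists>y\<in>V. dist y z < \<epsilon>"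
      using subsetD[OF A_clV z] by (simp only: closure_approachable)
    ultimately obtain y where y: "y \<in> V" "dist y z < e / (2 * K')" by blast
    have yA: "y \<in> A" using V_A y by blast
    have "e / 2 > 0" using e by simp
    then have ev: "eventually (\<lambda>g. dist (\<Phi> g y) 0 < e/2) cofinite"
      using V[OF y(1)] unfolding tendsto_iff by blast
    then show "eventually (\<lambda>g. dist (\<Phi> g z) 0 < e) cofinite"
    proof (rule eventually_mono)
      fix g assume g: "dist (\<Phi> g y) 0 < e/2"
      have zy: "z - y \<in> A" using z yA by (rule csub_diff[OF A_sub])
      have e1: "\<Phi> g z = \<Phi> g y + \<Phi> g (z - y)" using add[OF yA zy] by simp
      have "cmod (\<Phi> g (z - y)) \<le> K * norm (z - y)" by (rule bd[OF zy])
      also have "\<dots> \<le> K' * norm (z - y)" unfolding K'_def by (intro mult_right_mono) auto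
      also have "\<dots> < K' * (e / (2 * K'))"
        using y(2) K' by (intro mult_strict_left_mono) (auto simp: dist_norm norm_minus_commute)
      also have "\<dots> = e / 2" using K' by simp
      finally have "cmod (\<Phi> g (z - y)) < e / 2" .
      moreover have "cmod (\<Phi> g y) < e / 2" using g by simp
      ultimately have "cmod (\<Phi> g z) < e" unfolding e1 using norm_triangle_ineq[of "\<Phi> g y" "\<Phi> g (z - y)"] by linarith
      then show "dist (\<Phi> g z) 0 < e" by simp
    qed
  qed
qed

definition Fa :: "'a \<Rightarrow> 'g \<Rightarrow> 'a \<Rightarrow> 'a \<Rightarrow> 'a \<Rightarrow> complex" where
  "Fa a g v c w = \<phi> (v * (star (u g) * star a * u g) * c * (star (u g) * a * u g) * w)"
definition Ta :: "'a \<Rightarrow> 'a \<Rightarrow> 'a \<Rightarrow> 'a \<Rightarrow> complex" where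
  "Ta a v c w = \<phi> (star a * a) * \<phi> c * \<phi> (v * w)"
definition Da :: "'a \<Rightarrow> 'g \<Rightarrow> 'a \<Rightarrow> 'a \<Rightarrow> 'a \<Rightarrow> complex" where
  "Da a g v c w = Fa a g v c w - Ta a v c w"

lemma scA[intro]: "x \<in> A \<Longrightarrow> sc iu k * x \<in> A" by (rule csub_sc[OF A_sub])
lemma addA[intro]: "x \<in> A \<Longrightarrow> y \<in> A \<Longrightarrow> x + y \<in> A" by (rule csub_add[OF A_sub])

lemma D_lin:
  assumes aA: "a \<in> A" and A: "v \<in> A" "v' \<in> A" "c \<in> A" "c' \<in> A" "w \<in> A" "w' \<in> A"
  shows "Da a g (v + v') c w = Da a g v c w + Da a g v' c w"
    "Da a g (sc iu k * v) c w = k * Da a g v c w"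
    "Da a g v (c + c') w = Da a g v c w + Da a g v c' w"
    "Da a g v (sc iu k * c) w = k * Da a g v c w"
    "Da a g v c (w + w') = Da a g v c w + Da a g v c w'"
    "Da a g v c (sc iu k * w) = k * Da a g v c w"
proof -
  let ?X = "star (u g) * star a * u g" and ?Y = "star (u g) * a * u g"
  have XY: "?X \<in> A" "?Y \<in> A" using aA by auto
  show "Da a g (v + v') c w = Da a g v c w + Da a g v' c w"
  proof -
    have "\<phi> ((v + v') * ?X * c * ?Y * w) = \<phi> (v * ?X * c * ?Y * w + v' * ?X * c * ?Y * w)"
      by (simp only: distrib_right)
    also have "\<dots> = \<phi> (v * ?X * c * ?Y * w) + \<phi> (v' * ?X * c * ?Y * w)"
      by (rule ph.phi_add) (use A XY in auto)
    finally have 1: "\<phi> ((v + v') * ?X * c * ?Y * w) = \<phi> (v * ?X * c * ?Y * w) + \<phi> (v' * ?X * c * ?Y * w)" .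
    have "\<phi> ((v + v') * w) = \<phi> (v * w + v' * w)" by (simp only: distrib_right)
    also have "\<dots> = \<phi> (v * w) + \<phi> (v' * w)" by (rule ph.phi_add) (use A in auto)
    finally have 2: "\<phi> ((v + v') * w) = \<phi> (v * w) + \<phi> (v' * w)" .
    show ?thesis unfolding Da_def Fa_def Ta_def 1 2 by (simp add: algebra_simps)
  qed
  show "Da a g (sc iu k * v) c w = k * Da a g v c w"
  proof -
    have "sc iu k * v * ?X * c * ?Y * w = sc iu k * (v * ?X * c * ?Y * w)" by (simp add: mult.assoc)
    moreover have "sc iu k * v * w = sc iu k * (v * w)" by (simp add: mult.assoc)
    ultimately show ?thesis unfolding Da_def Fa_def Ta_def using A XY aA
      by (simp add: ph.phi_sc mA starA uA algebra_simps)
  qed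
  show "Da a g v (c + c') w = Da a g v c w + Da a g v c' w"
    unfolding Da_def Fa_def Ta_def using A XY aA
    by (simp add: distrib_right distrib_left ph.phi_add mA starA uA algebra_simps)
  show "Da a g v (sc iu k * c) w = k * Da a g v c w"
  proof -
    have "v * ?X * (sc iu k * c) * ?Y * w = sc iu k * (v * ?X * c * ?Y * w)" by (simp add: mult.assoc sc_mid)
    then show ?thesis unfolding Da_def Fa_def Ta_def using A XY aA
      by (simp add: ph.phi_sc mA starA uA algebra_simps)
  qed
  show "Da a g v c (w + w') = Da a g v c w + Da a g v c w'"
    unfolding Da_def Fa_def Ta_def using A XY aA
    by (simp add: distrib_left ph.phi_add mA starA uA algebra_simps)
  show "Da a g v c (sc iu k * w) = k * Da a g v c w"
  proof -
    have "v * ?X * c * ?Y * (sc iu k * w) = sc iu k * (v * ?X * c * ?Y * w)" by (simp add: mult.assoc sc_mid)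
    moreover have "v * (sc iu k * w) = sc iu k * (v * w)" by (simp add: sc_mid)
    ultimately show ?thesis unfolding Da_def Fa_def Ta_def using A XY aA
      by (simp add: ph.phi_sc mA starA uA algebra_simps)
  qed
qed

lemma normX: "norm (star (u g) * b * u g) \<le> norm b"
proof -
  have "norm (star (u g) * b * u g) \<le> norm (star (u g) * b) * norm (u g)" by (rule norm_mult_ineq)
  also have "\<dots> = norm (star (u g) * b)" by (simp add: norm_u)
  also have "\<dots> \<le> norm (star (u g)) * norm b" by (rule norm_mult_ineq)
  also have "\<dots> = norm b" by (simp add: norm_u)
  finally show ?thesis .
qed

lemma norm5: "norm (x1 * x2 * x3 * x4 * x5) \<le> norm x1 * norm x2 * norm x3 * norm x4 * norm (x5::'a)"
proof -
  have "norm (x1 * x2 * x3 * x4 * x5) \<le> norm (x1 * x2 * x3 * x4) * norm x5" by (rule norm_mult_ineq)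
  also have "norm (x1 * x2 * x3 * x4) \<le> norm (x1 * x2 * x3) * norm x4" by (rule norm_mult_ineq)
  also have "norm (x1 * x2 * x3) \<le> norm (x1 * x2) * norm x3" by (rule norm_mult_ineq)
  also have "norm (x1 * x2) \<le> norm x1 * norm x2" by (rule norm_mult_ineq)
  finally show ?thesis by (simp add: mult_right_mono mult_left_mono)
qed

lemma D_bound:
  assumes aA: "a \<in> A" and A: "v \<in> A" "c \<in> A" "w \<in> A"
  shows "cmod (Da a g v c w) \<le> (2 * (norm a)^2 + 4 * cmod (\<phi> (star a * a))) * (norm v * norm c * norm w)"
proof -
  let ?X = "star (u g) * star a * u g" and ?Y = "star (u g) * a * u g"
  have XY: "?X \<in> A" "?Y \<in> A" using aA by auto
  have "cmod (Fa a g v c w) \<le> 2 * norm (v * ?X * c * ?Y * w)"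
    unfolding Fa_def using A XY by (intro ph.phi_bound) auto
  also have "norm (v * ?X * c * ?Y * w) \<le> norm v * norm ?X * norm c * norm ?Y * norm w" by (rule norm5)
  also have "\<dots> \<le> norm v * norm a * norm c * norm a * norm w"
    using normX[of g "star a"] normX[of g a]
    by (intro mult_mono mult_right_mono mult_left_mono) auto
  finally have F: "cmod (Fa a g v c w) \<le> 2 * (norm a)^2 * (norm v * norm c * norm w)"
    by (simp add: power2_eq_square mult_ac)
  have "cmod (Ta a v c w) = cmod (\<phi> (star a * a)) * cmod (\<phi> c) * cmod (\<phi> (v * w))"
    unfolding Ta_def by (simp add: norm_mult)
  also have "\<dots> \<le> cmod (\<phi> (star a * a)) * (2 * norm c) * (2 * norm (v * w))"
    using A by (intro mult_mono mult_left_mono ph.phi_bound) auto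
  also have "\<dots> \<le> cmod (\<phi> (star a * a)) * (2 * norm c) * (2 * (norm v * norm w))"
    by (intro mult_left_mono norm_mult_ineq) auto
  finally have T: "cmod (Ta a v c w) \<le> 4 * cmod (\<phi> (star a * a)) * (norm v * norm c * norm w)"
    by (simp add: mult_ac)
  have "cmod (Da a g v c w) \<le> cmod (Fa a g v c w) + cmod (Ta a v c w)"
    unfolding Da_def by (rule norm_triangle_ineq4)
  then show ?thesis using F T by (simp add: algebra_simps)
qed

end

context mainloc
begin

lemma tri:
  assumes a: "a \<in> A2" "\<phi> a = 0" and A: "v \<in> A" "c \<in> A" "w \<in> A"
  shows "((\<lambda>g. Da a g v c w) \<longlongrightarrow> 0) cofinite"
proof -
  have aA: "a \<in> A" using a by auto
  define C0 where "C0 = 2 * (norm a)^2 + 4 * cmod (\<phi> (star a * a))"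
  have G: "((\<lambda>g. Da a g v c w) \<longlongrightarrow> 0) cofinite" if "v \<in> Gen" "c \<in> Gen" "w \<in> Gen" for v c w
  proof (rule tendsto_eventually)
    show "\<forall>\<^sub>F g in cofinite. Da a g v c w = 0"
      using step1[OF a that] by (rule eventually_mono) (simp add: Da_def Fa_def Ta_def)
  qed
  have SA: "((\<lambda>g. Da a g v c w) \<longlongrightarrow> 0) cofinite" if "v \<in> A" "c \<in> Gen" "w \<in> Gen" for v c w
  proof -
    have cA: "c \<in> A" "w \<in> A" using that Gen_A by auto
    show ?thesis
    proof (rule ext1[where \<Phi> = "\<lambda>g x. Da a g x c w" and K = "C0 * norm c * norm w" and z = v])
      fix g x y assume xy: "x \<in> A" "y \<in> A"
      show "Da a g (x + y) c w = Da a g x c w + Da a g y c w" using D_lin(1)[OF aA xy cA(1) cA(1) cA(2) cA(2)] .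
    next
      fix g x k assume x: "x \<in> A"
      show "Da a g (sc iu k * x) c w = k * Da a g x c w" using D_lin(2)[OF aA x x cA(1) cA(1) cA(2) cA(2)] .
    next
      fix g x assume x: "x \<in> A"
      show "cmod (Da a g x c w) \<le> C0 * norm c * norm w * norm x"
        using D_bound[OF aA x cA, of g] unfolding C0_def by (simp add: mult_ac)
    next
      fix x assume "x \<in> Gen" then show "((\<lambda>g. Da a g x c w) \<longlongrightarrow> 0) cofinite" using G that by blast
    qed (rule that(1))
  qed
  have SB: "((\<lambda>g. Da a g v c w) \<longlongrightarrow> 0) cofinite" if "v \<in> A" "c \<in> A" "w \<in> Gen" for v c w
  proof -
    have wA: "w \<in> A" using that Gen_A by auto
    show ?thesis
    proof (rule ext1[where \<Phi> = "\<lambda>g x. Da a g v x w" and K = "C0 * norm v * norm w" and z = c])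
      fix g x y assume xy: "x \<in> A" "y \<in> A"
      show "Da a g v (x + y) w = Da a g v x w + Da a g v y w" using D_lin(3)[OF aA that(1) that(1) xy wA wA] .
    next
      fix g x k assume x: "x \<in> A"
      show "Da a g v (sc iu k * x) w = k * Da a g v x w" using D_lin(4)[OF aA that(1) that(1) x x wA wA] .
    next
      fix g x assume x: "x \<in> A"
      show "cmod (Da a g v x w) \<le> C0 * norm v * norm w * norm x"
        using D_bound[OF aA that(1) x wA, of g] unfolding C0_def by (simp add: mult_ac)
    next
      fix x assume "x \<in> Gen" then show "((\<lambda>g. Da a g v x w) \<longlongrightarrow> 0) cofinite" using SA that by blast
    qed (rule that(2))
  qed
  show ?thesis
  proof (rule ext1[where \<Phi> = "\<lambda>g x. Da a g v c x" and K = "C0 * norm v * norm c" and z = w])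
    fix g x y assume xy: "x \<in> A" "y \<in> A"
    show "Da a g v c (x + y) = Da a g v c x + Da a g v c y" using D_lin(5)[OF aA A(1) A(1) A(2) A(2) xy] .
  next
    fix g x k assume x: "x \<in> A"
    show "Da a g v c (sc iu k * x) = k * Da a g v c x" using D_lin(6)[OF aA A(1) A(1) A(2) A(2) x x] .
  next
    fix g x assume x: "x \<in> A"
    show "cmod (Da a g v c x) \<le> C0 * norm v * norm c * norm x"
      using D_bound[OF aA A(1) A(2) x, of g] unfolding C0_def by (simp add: mult_ac)
  next
    fix x assume "x \<in> Gen" then show "((\<lambda>g. Da a g v c x) \<longlongrightarrow> 0) cofinite" using SB A by blast
  qed (rule A(3))
qed

end

context mainloc
begin

lemma key:
  assumes a: "a \<in> A2" "\<phi> a = 0" and p: "\<phi> (star a * a) \<noteq> 0"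
    and x: "x \<in> A" and comm: "\<And>g. x * (star (u g) * a * u g) = (star (u g) * a * u g) * x"
    and v: "v \<in> A" and w: "w \<in> A"
  shows "\<phi> (v * x * w) = \<phi> x * \<phi> (v * w)"
proof -
  have xw: "x * w \<in> A" using x w by auto
  have eqF: "Fa a g v x w = Fa a g v 1 (x * w)" for g
  proof -
    let ?X = "star (u g) * star a * u g" and ?Y = "star (u g) * a * u g"
    have "v * ?X * x * ?Y * w = v * ?X * (x * ?Y) * w" by (simp only: mult.assoc)
    also have "\<dots> = v * ?X * (?Y * x) * w" by (simp only: comm)
    also have "\<dots> = v * ?X * 1 * ?Y * (x * w)" by (simp only: mult.assoc mult_1_left)
    finally show ?thesis unfolding Fa_def by simp
  qed
  have t1: "((\<lambda>g. Fa a g v x w) \<longlongrightarrow> Ta a v x w) cofinite"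
    using tri[OF a v x w] unfolding Da_def LIM_zero_iff .
  have t2: "((\<lambda>g. Fa a g v x w) \<longlongrightarrow> Ta a v 1 (x * w)) cofinite"
    using tri[OF a v oneA xw] unfolding Da_def LIM_zero_iff eqF .
  have nb: "cofinite \<noteq> (bot :: 'g filter)" using G_inf by simp
  have "Ta a v x w = Ta a v 1 (x * w)" using tendsto_unique[OF nb t1 t2] .
  then have "\<phi> (star a * a) * (\<phi> x * \<phi> (v * w)) = \<phi> (star a * a) * \<phi> (v * x * w)"
    unfolding Ta_def by (simp add: ph.phi_1 mult.assoc)
  then show ?thesis using p by simp
qed

lemma main1:
  assumes x: "x \<in> A"
    and comm: "\<forall>d\<in>cgen star iu (\<Union>g. (\<lambda>a. star (u g) * a * u g) ` A2). x * d = d * x"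
  shows "x \<in> range (sc iu)"
proof -
  have "range (sc iu) \<subseteq> A2" using csub_scal[OF A2_sub] by blast
  then obtain a' where a': "a' \<in> A2" "a' \<notin> range (sc iu)" using A2_nontriv by blast
  define a where "a = a' - sc iu (\<phi> a')"
  have aA2: "a \<in> A2" unfolding a_def using a' csub_diff[OF A2_sub] csub_scal[OF A2_sub] by blast
  have a'A: "a' \<in> A" using a' by auto
  have pa: "\<phi> a = 0" unfolding a_def using a'A by (simp add: ph.phi_diff csub_scal[OF A_sub] ph.phi_scal)
  have an: "a \<noteq> 0" unfolding a_def using a' by auto
  have pf: "\<forall>x\<in>A2. \<phi> (star x * x) = 0 \<longrightarrow> x = 0" using phi2_faithful unfolding faithful_state_def by (rule conjunct2)
  have p: "\<phi> (star a * a) \<noteq> 0" using pf[rule_format, OF aA2] an by auto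
  have cm: "x * (star (u g) * a * u g) = (star (u g) * a * u g) * x" for g
  proof -
    have "star (u g) * a * u g \<in> (\<Union>g. (\<lambda>a. star (u g) * a * u g) ` A2)"
      using aA2 by (intro UN_I[of g]) auto
    then have "star (u g) * a * u g \<in> cgen star iu (\<Union>g. (\<lambda>a. star (u g) * a * u g) ` A2)"
      by (rule subsetD[OF cgen_incl])
    then show ?thesis by (rule comm[rule_format])
  qed
  define x0 where "x0 = x - sc iu (\<phi> x)"
  have x0A: "x0 \<in> A" unfolding x0_def using x by (simp add: csub_diff[OF A_sub] csub_scal[OF A_sub])
  have "\<forall>y\<in>A. \<phi> (star y * star x0 * x0 * y) = 0"
  proof
    fix y assume y: "y \<in> A"
    let ?S = "star y * star x0"
    have SA: "?S \<in> A" using y x0A by auto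
    have e: "star y * star x0 * x0 * y = ?S * x * y - sc iu (\<phi> x) * (?S * y)"
      unfolding x0_def by (simp add: right_diff_distrib left_diff_distrib mult.assoc sc_mid)
    have "\<phi> (?S * x * y - sc iu (\<phi> x) * (?S * y)) = \<phi> (?S * x * y) - \<phi> (sc iu (\<phi> x) * (?S * y))"
      using SA x y by (intro ph.phi_diff) auto
    also have "\<phi> (?S * x * y) = \<phi> x * \<phi> (?S * y)" by (rule key[OF aA2 pa p x cm SA y])
    also have "\<phi> (sc iu (\<phi> x) * (?S * y)) = \<phi> x * \<phi> (?S * y)" using SA y by (simp add: ph.phi_sc mA)
    finally show "\<phi> (star y * star x0 * x0 * y) = 0" unfolding e by simp
  qed
  moreover have "\<forall>x\<in>A. (\<forall>y\<in>A. \<phi> (star y * star x * x * y) = 0) \<longrightarrow> x = 0"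
    using phi_gns unfolding gns_faithful_def .
  ultimately have "x0 = 0" using x0A by blast
  then show ?thesis unfolding x0_def by simp
qed

end

theorem mainTheorem4:
  fixes star :: "'a::{real_normed_algebra_1,banach} \<Rightarrow> 'a" and iu :: 'a
    and B A1 A2 A :: "'a set" and \<alpha> :: "'g::group_add \<Rightarrow> 'a \<Rightarrow> 'a" and u :: "'g \<Rightarrow> 'a"
    and \<phi> :: "'a \<Rightarrow> complex"
  assumes amb: "cstar_ambient star iu"
    and G_inf: "infinite (UNIV :: 'g set)"
    and cp: "reduced_crossed_product star iu B \<alpha> u A1"
    and phi1_faithful: "faithful_state star iu B \<phi>"
    and phi1_inv: "\<forall>g. \<forall>b\<in>B. \<phi> (\<alpha> g b) = \<phi> b"
    and phi1_ext: "\<forall>g. \<forall>b\<in>B. g \<noteq> 0 \<longrightarrow> \<phi> (b * u g) = 0"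
    and A2_sub: "cstar_sub star iu A2"
    and A2_nontriv: "A2 \<noteq> range (sc iu)"
    and phi2_faithful: "faithful_state star iu A2 \<phi>"
    and A_def: "A = cgen star iu (A1 \<union> A2)"
    and phi_state: "is_state star iu A \<phi>"
    and phi_gns: "gns_faithful star A \<phi>"
    and phi_free: "free_pair \<phi> A1 A2"
  shows "(\<forall>x\<in>A. (\<forall>d\<in>cgen star iu (\<Union>g. (\<lambda>a. star (u g) * a * u g) ` A2). x * d = d * x)
              \<longrightarrow> x \<in> range (sc iu))
       \<and> (\<forall>x\<in>A. (\<forall>d\<in>cgen star iu (B \<union> (\<Union>g. (\<lambda>a. star (u g) * a * u g) ` A2)). x * d = d * x)
              \<longrightarrow> x \<in> range (sc iu))"
proof -
  interpret m: mainloc star iu B A1 A2 A \<alpha> u \<phi>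
    by unfold_locales (fact amb G_inf cp phi1_faithful phi1_inv phi1_ext A2_sub A2_nontriv
        phi2_faithful A_def phi_state phi_gns phi_free)+
  have one: "\<forall>x\<in>A. (\<forall>d\<in>cgen star iu (\<Union>g. (\<lambda>a. star (u g) * a * u g) ` A2). x * d = d * x)
              \<longrightarrow> x \<in> range (sc iu)"
    using m.main1 by blast
  have sub: "cgen star iu (\<Union>g. (\<lambda>a. star (u g) * a * u g) ` A2)
      \<subseteq> cgen star iu (B \<union> (\<Union>g. (\<lambda>a. star (u g) * a * u g) ` A2))"
    by (rule m.cgen_mono) blast
  have two: "\<forall>x\<in>A. (\<forall>d\<in>cgen star iu (B \<union> (\<Union>g. (\<lambda>a. star (u g) * a * u g) ` A2)). x * d = d * x)
              \<longrightarrow> x \<in> range (sc iu)"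
  proof (intro ballI impI)
    fix x assume x: "x \<in> A"
      and c: "\<forall>d\<in>cgen star iu (B \<union> (\<Union>g. (\<lambda>a. star (u g) * a * u g) ` A2)). x * d = d * x"
    have "\<forall>d\<in>cgen star iu (\<Union>g. (\<lambda>a. star (u g) * a * u g) ` A2). x * d = d * x"
      using c sub by blast
    then show "x \<in> range (sc iu)" using one x by blast
  qed
  show ?thesis using one two by (rule conjI)
qed

end
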